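(* Let $\mathcal{U}$ be a CFI on $X=[0,1]$ with slope interval $S$, let $u\in\mathcal{U}$, and suppose $I=[a,b]\subseteq X$ satisfies $\underline u<u<\bar u$ on $I$. Let $h_{a,b}$ be defined as in the context. Then for every $\varepsilon\in[0,1]$, both $u+\varepsilon h_{a,b}$ and $u-\varepsilon h_{a,b}$ are continuous convex functions on $X$ with $\partial(u\pm\varepsilon h_{a,b})(X)\subseteq S$. Furthermore, $h_{a,b}\equiv0$ on $X$ if and only if there exist three (not necessarily distinct) affine functions $\ell_0,\ell_1,\ell_2$ on $I$ with $u|_I=\max\{\ell_0,\ell_1,\ell_2\}$.
   Context: A CFI is $\mathcal{U}=\{u\in\mathcal{K}(X):\underline u\le u\le\bar u,\ \partial u(X)\subseteq S\}$ with $S=[\underline s,\bar s]$, $\underline u\le\bar u$ continuous convex with $\partial\underline u(X),\partial\bar u(X)\subseteq S$; $\mathcal{K}(X)$ is the set of continuous convex functions on $X$ and $\partial u(X)=\bigcup_{x\in\mathrm{int}X}\partial u(x)$. For $u\in\mathcal{K}(X)$ let $t_u(x;a^+)=u(a)+\partial_+u(a)(x-a)$ and $t_u(x;b^-)=u(b)+\partial_-u(b)(x-b)$. Define $g_{a,b}(x)=0$ for $x\notin[a,b]$ and $g_{a,b}(x)=u(x)-\max\{t_u(x;a^+),t_u(x;b^-)\}$ for $x\in[a,b]$. For a function $\phi$ on $X$, $\mathrm{vex}[\phi](x)=\sup\{g(x): g:X\to\mathbb{R}$ convex, $g\le\phi\}$ (convex envelope). Finally $h_{a,b}=\mathrm{vex}[u+g_{a,b}]-u$.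 *)

theory Defs
  imports "HOL-Analysis.Analysis"
begin

text \<open>The ambient domain X = [0,1]. Functions are real \<Rightarrow> real; only values on X matter.\<close>

abbreviation X :: "real set" where "X \<equiv> {0..1}"

definition cvx :: "(real \<Rightarrow> real) \<Rightarrow> bool" where
  "cvx u \<longleftrightarrow> continuous_on X u \<and> convex_on X u"

definition subdiff :: "(real \<Rightarrow> real) \<Rightarrow> real \<Rightarrow> real set" where
  "subdiff u x = {s. \<forall>y\<in>X. u y \<ge> u x + s * (y - x)}"

definition subdiff_X :: "(real \<Rightarrow> real) \<Rightarrow> real set" where
  "subdiff_X u = (\<Union>x\<in>{0<..<1}. subdiff u x)"

definition CFI :: "(real \<Rightarrow> real) \<Rightarrow> (real \<Rightarrow> real) \<Rightarrow> real \<Rightarrow> real \<Rightarrow> (real \<Rightarrow> real) set" where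
  "CFI lo hi s1 s2 = {u. cvx u \<and> (\<forall>x\<in>X. lo x \<le> u x \<and> u x \<le> hi x) \<and> subdiff_X u \<subseteq> {s1..s2}}"

definition CFI_data :: "(real \<Rightarrow> real) \<Rightarrow> (real \<Rightarrow> real) \<Rightarrow> real \<Rightarrow> real \<Rightarrow> bool" where
  "CFI_data lo hi s1 s2 \<longleftrightarrow> cvx lo \<and> cvx hi \<and> (\<forall>x\<in>X. lo x \<le> hi x)
     \<and> subdiff_X lo \<subseteq> {s1..s2} \<and> subdiff_X hi \<subseteq> {s1..s2}"

definition rderiv :: "(real \<Rightarrow> real) \<Rightarrow> real \<Rightarrow> real" where
  "rderiv u a = Lim (at_right a) (\<lambda>x. (u x - u a) / (x - a))"

definition lderiv :: "(real \<Rightarrow> real) \<Rightarrow> real \<Rightarrow> real" where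
  "lderiv u b = Lim (at_left b) (\<lambda>x. (u x - u b) / (x - b))"

definition t_right :: "(real \<Rightarrow> real) \<Rightarrow> real \<Rightarrow> real \<Rightarrow> real" where
  "t_right u a x = u a + rderiv u a * (x - a)"

definition t_left :: "(real \<Rightarrow> real) \<Rightarrow> real \<Rightarrow> real \<Rightarrow> real" where
  "t_left u b x = u b + lderiv u b * (x - b)"

definition g_ab :: "(real \<Rightarrow> real) \<Rightarrow> real \<Rightarrow> real \<Rightarrow> real \<Rightarrow> real" where
  "g_ab u a b x = (if x \<in> {a..b} then u x - max (t_right u a x) (t_left u b x) else 0)"

definition vex :: "(real \<Rightarrow> real) \<Rightarrow> real \<Rightarrow> real" where
  "vex \<phi> x = (SUP g\<in>{g. convex_on X g \<and> (\<forall>y\<in>X. g y \<le> \<phi> y)}. g x)"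

definition h_ab :: "(real \<Rightarrow> real) \<Rightarrow> real \<Rightarrow> real \<Rightarrow> real \<Rightarrow> real" where
  "h_ab u a b x = vex (\<lambda>y. u y + g_ab u a b y) x - u x"

end

theory Submission
  imports Defs
begin

definition cx :: "real set \<Rightarrow> (real \<Rightarrow> real) \<Rightarrow> bool" where
  "cx A f \<longleftrightarrow> (\<forall>x\<in>A. \<forall>y\<in>A. \<forall>z\<in>A. x < y \<longrightarrow> y < z \<longrightarrow>
      f y * (z - x) \<le> f x * (z - y) + f z * (y - x))"

lemma cxD: "cx A f \<Longrightarrow> x\<in>A \<Longrightarrow> y\<in>A \<Longrightarrow> z\<in>A \<Longrightarrow> x < y \<Longrightarrow> y < z \<Longrightarrow>
      f y * (z - x) \<le> f x * (z - y) + f z * (y - x)"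
  unfolding cx_def by blast

lemma convex_on_imp_cx: assumes "convex_on A f" shows "cx A f"
  unfolding cx_def
proof (intro ballI impI)
  fix x y z assume xyz: "x\<in>A" "y\<in>A" "z\<in>A" "x<y" "y<z"
  have zx: "z - x > 0" using xyz by simp
  define t where "t = (y - x)/(z - x)"
  have t: "0 \<le> t" "t \<le> 1" using xyz zx by (auto simp: t_def field_simps)
  have tz: "t * (z - x) = y - x" using zx by (simp add: t_def)
  have "(1 - t) * x + t * z = x + t * (z - x)" by (simp add: algebra_simps)
  hence "y = (1 - t) *\<^sub>R x + t *\<^sub>R z" using tz by simp
  hence "f y \<le> (1-t) * f x + t * f z" using convex_onD[OF assms t] xyz by simp
  hence "f y * (z - x) \<le> ((1-t) * f x + t * f z) * (z - x)" using zx by (simp add: mult_right_mono)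
  also have "\<dots> = f x * ((1-t) * (z - x)) + f z * (t * (z - x))" by (simp add: algebra_simps)
  also have "(1-t) * (z - x) = z - y" using tz by (simp add: algebra_simps)
  also have "t * (z - x) = y - x" using tz by simp
  finally show "f y * (z - x) \<le> f x * (z - y) + f z * (y - x)" .
qed

lemma cx_imp_convex_on: assumes "cx A f" "convex A" shows "convex_on A f"
proof (rule convex_on_linorderI[OF _ assms(2)])
  fix t x y :: real assume t: "0<t" "t<1" and xy: "x\<in>A" "y\<in>A" "x<y"
  define p where "p = (1 - t) *\<^sub>R x + t *\<^sub>R y"
  have p: "p = (1-t)*x + t*y" by (simp add: p_def)
  have "p - x = t * (y - x)" by (simp add: p algebra_simps)
  moreover have "t * (y - x) > 0" using t xy by simp
  ultimately have px: "x < p" by linarith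
  have "y - p = (1-t) * (y - x)" by (simp add: p algebra_simps)
  moreover have "(1-t) * (y - x) > 0" using t xy by simp
  ultimately have py: "p < y" by linarith
  have pA: "p \<in> A" using convexD[OF assms(2) xy(1,2), of "1-t" t] t p_def by simp
  have "f p * (y - x) \<le> f x * (y - p) + f y * (p - x)" using cxD[OF assms(1) xy(1) pA xy(2) px py] .
  also have "\<dots> = ((1-t) * f x + t * f y) * (y - x)" by (simp add: p algebra_simps)
  finally have "f p * (y - x) \<le> ((1-t) * f x + t * f y) * (y - x)" .
  thus "f ((1 - t) *\<^sub>R x + t *\<^sub>R y) \<le> (1 - t) * f x + t * f y" using xy p_def by simp
qed

lemma cx_cong: "cx A f \<Longrightarrow> (\<And>x. x\<in>A \<Longrightarrow> f x = g x) \<Longrightarrow> cx A g"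
  unfolding cx_def by simp

lemma cx_subset: "cx A f \<Longrightarrow> B \<subseteq> A \<Longrightarrow> cx B f"
  unfolding cx_def by blast

lemma cx_comb: assumes "cx A f" "cx A g" "0 \<le> \<alpha>" "0 \<le> \<beta>"
  shows "cx A (\<lambda>x. \<alpha> * f x + \<beta> * g x + p * x + q)"
  unfolding cx_def
proof (intro ballI impI)
  fix x y z assume xyz: "x\<in>A" "y\<in>A" "z\<in>A" "x<y" "y<z"
  have 1: "\<alpha> * (f y * (z - x)) \<le> \<alpha> * (f x * (z - y) + f z * (y - x))"
    using cxD[OF assms(1) xyz] assms(3) by (rule mult_left_mono)
  have 2: "\<beta> * (g y * (z - x)) \<le> \<beta> * (g x * (z - y) + g z * (y - x))"
    using cxD[OF assms(2) xyz] assms(4) by (rule mult_left_mono)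
  have 3: "(p * y + q) * (z - x) = (p * x + q) * (z - y) + (p * z + q) * (y - x)"
    by (simp add: algebra_simps)
  show "(\<alpha> * f y + \<beta> * g y + p * y + q) * (z - x)
         \<le> (\<alpha> * f x + \<beta> * g x + p * x + q) * (z - y) + (\<alpha> * f z + \<beta> * g z + p * z + q) * (y - x)"
    using 1 2 3 by (simp add: algebra_simps)
qed

lemma cx_affine: "cx A (\<lambda>x. p * x + q)"
  unfolding cx_def by (simp add: algebra_simps)

lemma cx_max: assumes "cx A f" "cx A g" shows "cx A (\<lambda>x. max (f x) (g x))"
  unfolding cx_def
proof (intro ballI impI)
  fix x y z assume xyz: "x\<in>A" "y\<in>A" "z\<in>A" "x<y" "y<z"
  have a: "z - y \<ge> 0" "y - x \<ge> 0" using xyz by auto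
  let ?R = "max (f x) (g x) * (z - y) + max (f z) (g z) * (y - x)"
  have A: "f x * (z - y) + f z * (y - x) \<le> ?R"
    using a by (intro add_mono mult_right_mono) auto
  have B: "g x * (z - y) + g z * (y - x) \<le> ?R"
    using a by (intro add_mono mult_right_mono) auto
  have A': "f y * (z - x) \<le> ?R" using A cxD[OF assms(1) xyz] by linarith
  have B': "g y * (z - x) \<le> ?R" using B cxD[OF assms(2) xyz] by linarith
  show "max (f y) (g y) * (z - x) \<le> ?R"
  proof (cases "f y \<le> g y")
    case True thus ?thesis using B' by (simp add: max_absorb2)
  next
    case False thus ?thesis using A' by (simp add: max_absorb1)
  qed
qed

definition sl :: "(real \<Rightarrow> real) \<Rightarrow> real \<Rightarrow> real \<Rightarrow> real" where
  "sl f p x = (f x - f p) / (x - p)"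

lemma sl_sym: "sl f p x = sl f x p"
  unfolding sl_def by (metis minus_diff_eq minus_divide_divide)

lemma div_le_div_crossI: "0 < (b::real) \<Longrightarrow> 0 < d \<Longrightarrow> a * d \<le> c * b \<Longrightarrow> a / b \<le> c / d"
  by (simp add: divide_simps)

lemma cx_sl: assumes "cx A f" "x\<in>A" "y\<in>A" "z\<in>A" "x < y" "y < z"
  shows "sl f x y \<le> sl f x z" "sl f x z \<le> sl f y z" "sl f x y \<le> sl f y z"
proof -
  have c: "f y * (z - x) \<le> f x * (z - y) + f z * (y - x)" using cxD[OF assms] .
  have p: "y - x > 0" "z - x > 0" "z - y > 0" using assms by auto
  have e1: "(f z - f x) * (y - x) - (f y - f x) * (z - x) = f x * (z - y) + f z * (y - x) - f y * (z - x)"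
    by (simp add: algebra_simps)
  have e2: "(f z - f y) * (z - x) - (f z - f x) * (z - y) = f x * (z - y) + f z * (y - x) - f y * (z - x)"
    by (simp add: algebra_simps)
  show 1: "sl f x y \<le> sl f x z" unfolding sl_def
    using c p e1 by (intro div_le_div_crossI) auto
  show 2: "sl f x z \<le> sl f y z" unfolding sl_def
    using c p e2 by (intro div_le_div_crossI) auto
  show "sl f x y \<le> sl f y z" using 1 2 by simp
qed

lemma subgrad_exists:
  assumes cxu: "cx X u" and z: "z \<in> {0<..<1}"
  shows "\<exists>s. s \<in> subdiff u z"
proof -
  let ?S = "(\<lambda>w. sl u w z) ` {0..<z}"
  define s where "s = Sup ?S"
  have ne: "?S \<noteq> {}" using z by auto
  have bdd: "bdd_above ?S"
  proof (rule bdd_aboveI2)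
    fix w assume "w \<in> {0..<z}"
    thus "sl u w z \<le> sl u z 1" using cx_sl(3)[OF cxu, of w z 1] z by auto
  qed
  have "s \<in> subdiff u z" unfolding subdiff_def
  proof (intro CollectI ballI)
    fix y assume y: "y \<in> X"
    consider "y < z" | "y = z" | "y > z" by linarith
    thus "u z + s * (y - z) \<le> u y"
    proof cases
      case 1
      have "sl u y z \<le> s" unfolding s_def using bdd 1 y by (intro cSup_upper) auto
      hence "(u z - u y) / (z - y) \<le> s" by (simp add: sl_def)
      hence "u z - u y \<le> s * (z - y)" using 1 by (simp add: divide_le_eq)
      thus ?thesis by (simp add: algebra_simps)
    next
      case 2 thus ?thesis by simp
    next
      case 3
      have "s \<le> sl u z y" unfolding s_def
      proof (rule cSup_least[OF ne])
        fix v assume "v \<in> ?S" then obtain w where "w \<in> {0..<z}" "v = sl u w z" by auto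
        thus "v \<le> sl u z y" using cx_sl(3)[OF cxu, of w z y] z y 3 by auto
      qed
      hence "s \<le> (u y - u z)/(y - z)" by (simp add: sl_def)
      hence "s * (y - z) \<le> u y - u z" using 3 by (simp add: le_divide_eq)
      thus ?thesis by simp
    qed
  qed
  thus ?thesis by blast
qed

lemma ext_antimono:
  fixes f :: "real \<Rightarrow> real"
  assumes cont: "continuous_on X f"
    and int: "\<And>x y. 0 < x \<Longrightarrow> x \<le> y \<Longrightarrow> y < 1 \<Longrightarrow> f y \<le> f x"
    and xy: "x \<in> X" "y \<in> X" "x \<le> y"
  shows "f y \<le> f x"
proof -
  have step1: "f y \<le> f x" if "0 < x" "x \<le> y" "y \<le> 1" for x y
  proof (cases "y < 1")
    case True thus ?thesis using int that by auto
  next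
    case False hence y1: "y = 1" using that by auto
    show ?thesis
    proof (cases "x = 1")
      case True thus ?thesis using y1 by simp
    next
      case False hence x1: "x < 1" using that by auto
      have cl: "closed {t \<in> {x..1}. f t \<le> f x}"
        using continuous_on_subset[OF cont, of "{x..1}"] that
        by (intro continuous_on_closed_Collect_le) (auto intro: continuous_on_const)
      have "{x..<1} \<subseteq> {t \<in> {x..1}. f t \<le> f x}" using int that by auto
      hence "closure {x..<1} \<subseteq> {t \<in> {x..1}. f t \<le> f x}" using cl by (rule closure_minimal)
      moreover have "1 \<in> closure {x..<1}" using x1 by simp
      ultimately have "1 \<in> {t \<in> {x..1}. f t \<le> f x}" by blast
      thus ?thesis using y1 by auto
    qed
  qed
  show ?thesis
  proof (cases "0 < x")
    case True thus ?thesis using step1 xy by auto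
  next
    case False hence x0: "x = 0" using xy by auto
    show ?thesis
    proof (cases "y = 0")
      case True thus ?thesis using x0 by simp
    next
      case False hence y0: "0 < y" using xy by auto
      have cl: "closed {t \<in> {0..y}. f y \<le> f t}"
        using continuous_on_subset[OF cont, of "{0..y}"] xy
        by (intro continuous_on_closed_Collect_le) (auto intro: continuous_on_const)
      have "{0<..y} \<subseteq> {t \<in> {0..y}. f y \<le> f t}" using step1 xy by auto
      hence "closure {0<..y} \<subseteq> {t \<in> {0..y}. f y \<le> f t}" using cl by (rule closure_minimal)
      moreover have "0 \<in> closure {0<..y}" using y0 by simp
      ultimately have "0 \<in> {t \<in> {0..y}. f y \<le> f t}" by blast
      thus ?thesis using x0 by auto
    qed
  qed
qed

definition SB :: "(real \<Rightarrow> real) \<Rightarrow> real \<Rightarrow> real \<Rightarrow> bool" where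
  "SB u s1 s2 \<longleftrightarrow> (\<forall>x\<in>X. \<forall>y\<in>X. x \<le> y \<longrightarrow> s1*(y-x) \<le> u y - u x \<and> u y - u x \<le> s2*(y-x))"

lemma SB_u:
  assumes cv: "cvx u" and sd: "subdiff_X u \<subseteq> {s1..s2}"
  shows "SB u s1 s2"
proof -
  have cxu: "cx X u" using cv by (simp add: cvx_def convex_on_imp_cx)
  have cont: "continuous_on X u" using cv by (simp add: cvx_def)
  have sg: "\<exists>s. s \<in> subdiff u z \<and> s1 \<le> s \<and> s \<le> s2" if z: "z \<in> {0<..<1}" for z
  proof -
    obtain s where s: "s \<in> subdiff u z" using subgrad_exists[OF cxu z] by blast
    hence "s \<in> subdiff_X u" using z unfolding subdiff_X_def by blast
    hence "s \<in> {s1..s2}" using sd by blast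
    thus ?thesis using s by auto
  qed
  have i2: "u y - s2 * y \<le> u x - s2 * x" if h: "0 < x" "x \<le> y" "y < 1" for x y
  proof -
    obtain s where s: "s \<in> subdiff u y" "s \<le> s2" using sg[of y] h by auto
    have "u y + s * (x - y) \<le> u x" using s h unfolding subdiff_def by auto
    moreover have "s * (y - x) \<le> s2 * (y - x)" using s h by (intro mult_right_mono) auto
    ultimately show ?thesis by (simp add: algebra_simps)
  qed
  have i1: "s1 * y - u y \<le> s1 * x - u x" if h: "0 < x" "x \<le> y" "y < 1" for x y
  proof -
    obtain s where s: "s \<in> subdiff u x" "s1 \<le> s" using sg[of x] h by auto
    have "u x + s * (y - x) \<le> u y" using s h unfolding subdiff_def by auto
    moreover have "s1 * (y - x) \<le> s * (y - x)" using s h by (intro mult_right_mono) auto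
    ultimately show ?thesis by (simp add: algebra_simps)
  qed
  have c2: "continuous_on X (\<lambda>t. u t - s2 * t)" using cont by (intro continuous_intros)
  have c1: "continuous_on X (\<lambda>t. s1 * t - u t)" using cont by (intro continuous_intros)
  show ?thesis unfolding SB_def
  proof (intro ballI impI conjI)
    fix x y assume xy: "x \<in> X" "y \<in> X" "x \<le> y"
    have "u y - s2 * y \<le> u x - s2 * x"
      using ext_antimono[OF c2 _ xy, simplified] i2 by blast
    thus "u y - u x \<le> s2 * (y - x)" by (simp add: algebra_simps)
    have "s1 * y - u y \<le> s1 * x - u x"
      using ext_antimono[OF c1 _ xy, simplified] i1 by blast
    thus "s1 * (y - x) \<le> u y - u x" by (simp add: algebra_simps)
  qed
qed

lemma rderiv_props:
  assumes cxu: "cx X u" and SB: "SB u s1 s2" and a: "0 \<le> a" "a < 1"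
  shows "rderiv u a = Inf ((\<lambda>t. sl u a t) ` {a<..1})"
   and "\<And>t. t \<in> {a<..1} \<Longrightarrow> rderiv u a \<le> sl u a t"
   and "\<And>x. x \<in> {0..<a} \<Longrightarrow> sl u x a \<le> rderiv u a"
   and "s1 \<le> rderiv u a"
proof -
  let ?S = "(\<lambda>t. sl u a t) ` {a<..1}"
  define r where "r = Inf ?S"
  have ne: "?S \<noteq> {}" using a by auto
  have lb: "s1 \<le> sl u a t" if "t \<in> {a<..1}" for t
  proof -
    have "s1 * (t - a) \<le> u t - u a" using SB that a unfolding SB_def by auto
    thus ?thesis using that by (simp add: sl_def le_divide_eq)
  qed
  have bdd: "bdd_below ?S" using lb by (intro bdd_belowI2) 
  have lo: "r \<le> sl u a t" if "t \<in> {a<..1}" for t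
    unfolding r_def using bdd that by (intro cInf_lower) auto
  have tend: "((\<lambda>t. sl u a t) \<longlongrightarrow> r) (at_right a)"
  proof (rule order_tendstoI)
    fix y assume y: "y < r"
    have "eventually (\<lambda>t. t \<in> {a<..<1}) (at_right a)" using eventually_at_right_real[OF a(2)] .
    thus "eventually (\<lambda>t. y < sl u a t) (at_right a)"
      by eventually_elim (use lo y in force)
  next
    fix y assume y: "r < y"
    then obtain v where v: "v \<in> ?S" "v < y" unfolding r_def using ne cInf_less_iff[OF ne bdd] by blast
    then obtain t0 where t0: "t0 \<in> {a<..1}" "sl u a t0 < y" by auto
    have "eventually (\<lambda>t. t \<in> {a<..<t0}) (at_right a)" using t0 by (intro eventually_at_right_real) auto
    thus "eventually (\<lambda>t. sl u a t < y) (at_right a)"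
    proof eventually_elim
      case (elim t)
      hence "sl u a t \<le> sl u a t0" using cx_sl(1)[OF cxu, of a t t0] a t0 by auto
      thus ?case using t0 by simp
    qed
  qed
  have rd: "rderiv u a = r" unfolding rderiv_def
    using tendsto_Lim[OF trivial_limit_at_right_real tend] by (simp add: sl_def)
  show "rderiv u a = Inf ?S" using rd r_def by simp
  show "\<And>t. t \<in> {a<..1} \<Longrightarrow> rderiv u a \<le> sl u a t" using rd lo by simp
  show "\<And>x. x \<in> {0..<a} \<Longrightarrow> sl u x a \<le> rderiv u a"
  proof -
    fix x assume x: "x \<in> {0..<a}"
    have "sl u x a \<le> r" unfolding r_def
    proof (rule cInf_greatest[OF ne])
      fix v assume "v \<in> ?S" then obtain t where "t \<in> {a<..1}" "v = sl u a t" by auto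
      thus "sl u x a \<le> v" using cx_sl(3)[OF cxu, of x a t] x a by auto
    qed
    thus "sl u x a \<le> rderiv u a" using rd by simp
  qed
  show "s1 \<le> rderiv u a" unfolding rd r_def using lb by (intro cInf_greatest[OF ne]) auto
qed

lemma lderiv_props:
  assumes cxu: "cx X u" and SB: "SB u s1 s2" and b: "0 < b" "b \<le> 1"
  shows "\<And>t. t \<in> {0..<b} \<Longrightarrow> sl u t b \<le> lderiv u b"
   and "\<And>y. y \<in> {b<..1} \<Longrightarrow> lderiv u b \<le> sl u b y"
   and "lderiv u b \<le> s2"
proof -
  let ?S = "(\<lambda>t. sl u t b) ` {0..<b}"
  define l where "l = Sup ?S"
  have ne: "?S \<noteq> {}" using b by auto
  have ub: "sl u t b \<le> s2" if "t \<in> {0..<b}" for t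
  proof -
    have "u b - u t \<le> s2 * (b - t)" using SB that b unfolding SB_def by auto
    thus ?thesis using that by (simp add: sl_def divide_le_eq)
  qed
  have bdd: "bdd_above ?S" using ub by (intro bdd_aboveI2)
  have up: "sl u t b \<le> l" if "t \<in> {0..<b}" for t
    unfolding l_def using bdd that by (intro cSup_upper) auto
  have tend: "((\<lambda>t. sl u b t) \<longlongrightarrow> l) (at_left b)"
  proof (rule order_tendstoI)
    fix y assume y: "l < y"
    have "eventually (\<lambda>t. t \<in> {0<..<b}) (at_left b)" using b by (intro eventually_at_left_real) 
    thus "eventually (\<lambda>t. sl u b t < y) (at_left b)"
    proof eventually_elim
      case (elim t)
      have "sl u t b \<le> l" using up elim by auto
      thus ?case using y sl_sym[of u b t] by simp
    qed
  next
    fix y assume y: "y < l"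
    then obtain v where v: "v \<in> ?S" "y < v" unfolding l_def using ne less_cSup_iff[OF ne bdd] by blast
    then obtain t0 where t0: "t0 \<in> {0..<b}" "y < sl u t0 b" by auto
    have "eventually (\<lambda>t. t \<in> {t0<..<b}) (at_left b)" using t0 by (intro eventually_at_left_real) auto
    thus "eventually (\<lambda>t. y < sl u b t) (at_left b)"
    proof eventually_elim
      case (elim t)
      hence "sl u t0 b \<le> sl u t b" using cx_sl(2)[OF cxu, of t0 t b] b t0 by auto
      thus ?case using t0 sl_sym[of u b t] by simp
    qed
  qed
  have ld: "lderiv u b = l" unfolding lderiv_def
    using tendsto_Lim[OF trivial_limit_at_left_real tend] by (simp add: sl_def)
  show "\<And>t. t \<in> {0..<b} \<Longrightarrow> sl u t b \<le> lderiv u b" using ld up by simp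
  show "\<And>y. y \<in> {b<..1} \<Longrightarrow> lderiv u b \<le> sl u b y"
  proof -
    fix y assume y: "y \<in> {b<..1}"
    have "l \<le> sl u b y" unfolding l_def
    proof (rule cSup_least[OF ne])
      fix v assume "v \<in> ?S" then obtain t where "t \<in> {0..<b}" "v = sl u t b" by auto
      thus "v \<le> sl u b y" using cx_sl(3)[OF cxu, of t b y] y b by auto
    qed
    thus "lderiv u b \<le> sl u b y" using ld by simp
  qed
  show "lderiv u b \<le> s2" unfolding ld l_def using ub by (intro cSup_least[OF ne]) auto
qed

definition fam :: "(real \<Rightarrow> real) \<Rightarrow> (real \<Rightarrow> real) set" where
  "fam \<phi> = {g. convex_on X g \<and> (\<forall>y\<in>X. g y \<le> \<phi> y)}"

lemma vex_eq: "vex \<phi> x = (SUP g\<in>fam \<phi>. g x)" unfolding vex_def fam_def by simp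

lemma vex_upper: assumes "G \<in> fam \<phi>" "x \<in> X" shows "G x \<le> vex \<phi> x"
  unfolding vex_eq
proof (rule cSUP_upper[OF assms(1)])
  show "bdd_above ((\<lambda>g. g x) ` fam \<phi>)" using assms(2)
    by (intro bdd_aboveI2[where M="\<phi> x"]) (auto simp: fam_def)
qed

lemma vex_le: assumes "fam \<phi> \<noteq> {}" "x \<in> X" shows "vex \<phi> x \<le> \<phi> x"
  unfolding vex_eq using assms by (intro cSUP_least) (auto simp: fam_def)

lemma vex_convex: assumes ne: "fam \<phi> \<noteq> {}" shows "convex_on X (vex \<phi>)"
proof (intro convex_onI)
  fix t x y :: real assume t: "0<t" "t<1" and xy: "x\<in>X" "y\<in>X"
  show "vex \<phi> ((1 - t) *\<^sub>R x + t *\<^sub>R y) \<le> (1 - t) * vex \<phi> x + t * vex \<phi> y"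
    unfolding vex_eq[of \<phi> "(1 - t) *\<^sub>R x + t *\<^sub>R y"]
  proof (rule cSUP_least[OF ne])
    fix G assume G: "G \<in> fam \<phi>"
    have "G ((1 - t) *\<^sub>R x + t *\<^sub>R y) \<le> (1 - t) * G x + t * G y"
      using G t xy by (intro convex_onD) (auto simp: fam_def)
    also have "\<dots> \<le> (1 - t) * vex \<phi> x + t * vex \<phi> y"
      using vex_upper[OF G] xy t by (intro add_mono mult_left_mono) auto
    finally show "G ((1 - t) *\<^sub>R x + t *\<^sub>R y) \<le> (1 - t) * vex \<phi> x + t * vex \<phi> y" .
  qed
qed (simp add: convex_real_interval)

lemma glue:
  assumes V: "cx X V" and cd: "0 \<le> c" "c \<le> d" "d \<le> 1" and F: "cx {c..d} F"
    and Fc: "0 < c \<Longrightarrow> F c \<le> V c" and Fd: "d < 1 \<Longrightarrow> F d \<le> V d"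
  shows "cx X (\<lambda>s. if s \<in> {c..d} then max (V s) (F s) else V s)"
  unfolding cx_def
proof (intro ballI impI)
  define G where "G s = (if s \<in> {c..d} then max (V s) (F s) else V s)" for s
  fix p r q assume prq: "p \<in> X" "r \<in> X" "q \<in> X" "p < r" "r < q"
  have GV: "V s \<le> G s" for s by (simp add: G_def)
  define L where "L s = G p * (q - s) + G q * (s - p)" for s
  have Vline: "V s * (q - p) \<le> L s" if s: "s \<in> {p..q}" for s
  proof (cases "s = p \<or> s = q")
    case True thus ?thesis using GV[of p] GV[of q] prq unfolding L_def
      by (auto intro: mult_right_mono)
  next
    case False
    hence s': "p < s" "s < q" using s by auto
    have "V s * (q - p) \<le> V p * (q - s) + V q * (s - p)"
      using cxD[OF V, of p s q] prq s' by auto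
    also have "\<dots> \<le> L s" unfolding L_def using GV[of p] GV[of q] s'
      by (intro add_mono mult_right_mono) auto
    finally show ?thesis .
  qed
  have R: "G r * (q - p) \<le> L r"
  proof (cases "r \<in> {c..d}")
    case False
    hence "G r = V r" unfolding G_def by (rule if_not_P)
    thus ?thesis using Vline[of r] prq by simp
  next
    case True
    define p' where "p' = max p c"
    define q' where "q' = min q d"
    have p'r: "p' \<le> r" and rq': "r \<le> q'" using True prq by (auto simp: p'_def q'_def)
    have p'cd: "p' \<in> {c..d}" and q'cd: "q' \<in> {c..d}" using True prq cd by (auto simp: p'_def q'_def)
    have Fp': "F p' * (q - p) \<le> L p'"
    proof (cases "c \<le> p")
      case True
      hence "p' = p" by (simp add: p'_def)
      moreover have "F p \<le> G p" using True prq \<open>r \<in> {c..d}\<close> by (auto simp: G_def)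
      ultimately show ?thesis unfolding L_def using prq by (auto intro: mult_right_mono)
    next
      case False
      hence "p' = c" "0 < c" using prq by (auto simp: p'_def)
      hence "F p' \<le> V p'" using Fc by simp
      hence "F p' * (q - p) \<le> V p' * (q - p)" using prq by (intro mult_right_mono) auto
      also have "\<dots> \<le> L p'" using Vline[of p'] p'r rq' prq by (auto simp: p'_def)
      finally show ?thesis .
    qed
    have Fq': "F q' * (q - p) \<le> L q'"
    proof (cases "q \<le> d")
      case True
      hence "q' = q" by (simp add: q'_def)
      moreover have "F q \<le> G q" using True prq \<open>r \<in> {c..d}\<close> by (auto simp: G_def)
      ultimately show ?thesis unfolding L_def using prq by (auto intro: mult_right_mono)
    next
      case False
      hence "q' = d" "d < 1" using prq by (auto simp: q'_def)
      hence "F q' \<le> V q'" using Fd by simp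
      hence "F q' * (q - p) \<le> V q' * (q - p)" using prq by (intro mult_right_mono) auto
      also have "\<dots> \<le> L q'" using Vline[of q'] p'r rq' prq cd True by (auto simp: q'_def)
      finally show ?thesis .
    qed
    have Fr: "F r * (q - p) \<le> L r"
    proof (cases "p' < r \<and> r < q'")
      case False
      hence "r = p' \<or> r = q'" using p'r rq' by auto
      thus ?thesis using Fp' Fq' by auto
    next
      case True
      have c1: "F r * (q' - p') \<le> F p' * (q' - r) + F q' * (r - p')"
        using cxD[OF F p'cd _ q'cd] True \<open>r \<in> {c..d}\<close> by auto
      have "(F r * (q - p)) * (q' - p') = (F r * (q' - p')) * (q - p)" by (simp add: algebra_simps)
      also have "\<dots> \<le> (F p' * (q' - r) + F q' * (r - p')) * (q - p)"
        using c1 prq by (intro mult_right_mono) auto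
      also have "\<dots> = (F p' * (q - p)) * (q' - r) + (F q' * (q - p)) * (r - p')"
        by (simp add: algebra_simps)
      also have "\<dots> \<le> L p' * (q' - r) + L q' * (r - p')"
        using Fp' Fq' True by (intro add_mono mult_right_mono) auto
      also have "\<dots> = L r * (q' - p')" unfolding L_def by (simp add: algebra_simps)
      finally have "(F r * (q - p)) * (q' - p') \<le> L r * (q' - p')" .
      thus ?thesis using True by simp
    qed
    have "G r = max (V r) (F r)" using True by (simp add: G_def)
    thus ?thesis using Fr Vline[of r] prq by (auto simp: max_def)
  qed
  show "(if r \<in> {c..d} then max (V r) (F r) else V r) * (q - p)
        \<le> (if p \<in> {c..d} then max (V p) (F p) else V p) * (q - r) +
           (if q \<in> {c..d} then max (V q) (F q) else V q) * (r - p)"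
    using R unfolding G_def[symmetric] L_def by simp
qed

lemma cont_from_convex:
  assumes Vc: "convex_on X V" and uc: "continuous_on X u" and le: "\<forall>t\<in>X. u t \<le> V t"
    and V0: "V 0 = u 0" and V1: "V 1 = u 1"
  shows "continuous_on X V"
proof -
  have int: "continuous_on {0<..<1} V"
    by (rule convex_on_continuous) (auto intro: convex_on_subset[OF Vc])
  have up: "V t \<le> (1 - t) * V 0 + t * V 1" if "t \<in> X" for t
    using convex_onD[OF Vc, of t 0 1] that by simp
  show ?thesis unfolding continuous_on_eq_continuous_within
  proof
    fix x assume x: "x \<in> X"
    show "continuous (at x within X) V"
    proof (cases "x \<in> {0<..<1}")
      case True
      hence "isCont V x" using int continuous_on_eq_continuous_at[of "{0<..<1}" V] by auto
      thus ?thesis by (rule continuous_at_imp_continuous_within)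
    next
      case False hence x01: "x = 0 \<or> x = 1" using x by auto
      have lim1: "(u \<longlongrightarrow> u x) (at x within X)" using uc x by (simp add: continuous_on_def)
      have "((\<lambda>t. (1 - t) * V 0 + t * V 1) \<longlongrightarrow> (1 - x) * V 0 + x * V 1) (at x within X)"
        by (intro tendsto_intros)
      moreover have "(1 - x) * V 0 + x * V 1 = V x" using x01 by auto
      ultimately have lim2: "((\<lambda>t. (1 - t) * V 0 + t * V 1) \<longlongrightarrow> V x) (at x within X)" by simp
      have "u x = V x" using x01 V0 V1 by auto
      hence lim1': "(u \<longlongrightarrow> V x) (at x within X)" using lim1 by simp
      have ev: "eventually (\<lambda>t. u t \<le> V t) (at x within X)"
        unfolding eventually_at_filter by (rule always_eventually) (use le in auto)
      have ev2: "eventually (\<lambda>t. V t \<le> (1 - t) * V 0 + t * V 1) (at x within X)"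
        unfolding eventually_at_filter by (rule always_eventually) (use up in auto)
      show ?thesis unfolding continuous_within using tendsto_sandwich[OF ev ev2 lim1' lim2] .
    qed
  qed
qed

lemma w_convex:
  assumes cxu: "cx X u" and g0: "\<forall>x\<in>X. 0 \<le> g x" and psi: "cx X (\<lambda>x. u x - g x)"
  shows "cx X (\<lambda>x. 2 * u x - vex (\<lambda>y. u y + g y) x)"
proof (rule ccontr)
  define phi where "phi = (\<lambda>y. u y + g y)"
  define V where "V = vex phi"
  define w where "w = (\<lambda>x. 2 * u x - V x)"
  have ufam: "u \<in> fam phi" using cxu g0 by (auto simp: fam_def phi_def intro: cx_imp_convex_on)
  hence ne: "fam phi \<noteq> {}" by auto
  have Vle: "V x \<le> phi x" if "x\<in>X" for x using vex_le[OF ne that] by (simp add: V_def)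
  have cxV: "cx X V" using vex_convex[OF ne] unfolding V_def by (rule convex_on_imp_cx)
  assume "\<not> cx X (\<lambda>x. 2 * u x - vex (\<lambda>y. u y + g y) x)"
  hence "\<not> cx X w" unfolding w_def V_def phi_def .
  then obtain x y z where xyz: "x\<in>X" "y\<in>X" "z\<in>X" "x<y" "y<z"
    and bad: "w x * (z - y) + w z * (y - x) < w y * (z - x)"
    unfolding cx_def by (auto simp: not_le)
  have zx: "z - x > 0" using xyz by simp
  define L where "L s = w x * (z - s) + w z * (s - x)" for s
  define F where "F s = 2 * u s - L s / (z - x)" for s
  define A where "A = (w x * z - w z * x) / (z - x)"
  define B where "B = (w z - w x) / (z - x)"
  define p where "p = - B"
  define q where "q = - A"
  have Lexp: "L s = (w x * z - w z * x) + (w z - w x) * s" for s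
    unfolding L_def by (simp add: algebra_simps)
  have Ls: "L s / (z - x) = A + B * s" for s
    unfolding Lexp A_def B_def by (simp add: add_divide_distrib)
  have Feq: "F s = 2 * u s + 0 * u s + p * s + q" for s
    unfolding F_def Ls p_def q_def by simp
  have cxuxz: "cx {x..z} u" using cx_subset[OF cxu] xyz by auto
  have "cx {x..z} (\<lambda>s. 2 * u s + 0 * u s + p * s + q)"
    using cx_comb[OF cxuxz cxuxz, of 2 0 p q] by simp
  hence Fcx: "cx {x..z} F" by (rule cx_cong) (simp add: Feq)
  have Fx: "F x = V x" unfolding F_def L_def w_def using zx by simp
  have Fz: "F z = V z" unfolding F_def L_def w_def using zx by simp
  define G where "G s = (if s \<in> {x..z} then max (V s) (F s) else V s)" for s
  have Gcx: "cx X G" unfolding G_def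
    by (rule glue[OF cxV _ _ _ Fcx]) (use xyz Fx Fz in auto)
  have psil: "(u s - g s) * (z - x) \<le> L s" if s: "s \<in> {x..z}" for s
  proof -
    have px: "u x - g x \<le> w x" using Vle[of x] xyz by (simp add: w_def phi_def)
    have pz: "u z - g z \<le> w z" using Vle[of z] xyz by (simp add: w_def phi_def)
    show ?thesis
    proof (cases "s = x \<or> s = z")
      case True thus ?thesis using px pz zx unfolding L_def by (auto intro: mult_right_mono)
    next
      case False
      hence s': "x < s" "s < z" using s by auto
      have "(u s - g s) * (z - x) \<le> (u x - g x) * (z - s) + (u z - g z) * (s - x)"
        using cxD[OF psi, of x s z] xyz s' by auto
      also have "\<dots> \<le> L s" unfolding L_def using px pz s'
        by (intro add_mono mult_right_mono) auto
      finally show ?thesis .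
    qed
  qed
  have Gfam: "G \<in> fam phi" unfolding fam_def
  proof (intro CollectI conjI ballI)
    show "convex_on X G" using Gcx by (rule cx_imp_convex_on) (simp add: convex_real_interval)
    fix s assume s: "s \<in> X"
    show "G s \<le> phi s"
    proof (cases "s \<in> {x..z}")
      case True
      have "(u s - g s) \<le> L s / (z - x)" using psil[OF True] zx by (simp add: le_divide_eq)
      hence "F s \<le> phi s" unfolding F_def phi_def by simp
      moreover have "G s = max (V s) (F s)" using True by (simp add: G_def)
      ultimately show ?thesis using Vle[OF s] by simp
    next
      case False
      hence "G s = V s" unfolding G_def by (rule if_not_P)
      thus ?thesis using Vle[OF s] by simp
    qed
  qed
  have "G y \<le> V y" using vex_upper[OF Gfam, of y] xyz by (simp add: V_def)
  moreover have "F y \<le> G y" using xyz by (simp add: G_def)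
  ultimately have "F y \<le> V y" by simp
  hence "w y \<le> L y / (z - x)" unfolding F_def w_def by simp
  hence "w y * (z - x) \<le> L y" using zx by (simp add: le_divide_eq)
  thus False using bad unfolding L_def by simp
qed

lemma GLsub:
  assumes a0: "\<forall>y\<in>X. f 0 + s1 * y \<le> f y" and a1: "\<forall>y\<in>X. f 1 - s2 * (1 - y) \<le> f y"
  shows "subdiff_X f \<subseteq> {s1..s2}"
proof
  fix s assume "s \<in> subdiff_X f"
  then obtain z where z: "z \<in> {0<..<1}" "s \<in> subdiff f z" unfolding subdiff_X_def by auto
  have sd: "\<forall>y\<in>X. f z + s * (y - z) \<le> f y" using z(2) unfolding subdiff_def by simp
  have h0: "f z + s * (0 - z) \<le> f 0" using bspec[OF sd, of 0] by simp
  have h1: "f z + s * (1 - z) \<le> f 1" using bspec[OF sd, of 1] by simp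
  have b0: "f 0 + s1 * z \<le> f z" using a0 z(1) by auto
  have b1: "f 1 - s2 * (1 - z) \<le> f z" using a1 z(1) by auto
  have "s1 * z \<le> s * z" using h0 b0 by (simp add: algebra_simps)
  hence "s1 \<le> s" using z(1) by simp
  moreover have "s * (1 - z) \<le> s2 * (1 - z)" using h1 b1 by (simp add: algebra_simps)
  hence "s \<le> s2" using z(1) by simp
  ultimately show "s \<in> {s1..s2}" by simp
qed

lemma part1:
  assumes cv: "cvx u" and SB: "SB u s1 s2" and g0: "\<forall>x\<in>X. 0 \<le> g x" and g01: "g 0 = 0" "g 1 = 0"
    and psi: "cx X (\<lambda>x. u x - g x)"
    and pb: "\<forall>y\<in>X. u 0 + s1 * y \<le> u y - g y \<and> u 1 - s2 * (1 - y) \<le> u y - g y"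
    and e: "\<epsilon> \<in> {0..1}"
    and hdef: "\<And>x. h x = vex (\<lambda>y. u y + g y) x - u x"
  shows "cvx (\<lambda>x. u x + \<epsilon> * h x) \<and> subdiff_X (\<lambda>x. u x + \<epsilon> * h x) \<subseteq> {s1..s2} \<and>
         cvx (\<lambda>x. u x - \<epsilon> * h x) \<and> subdiff_X (\<lambda>x. u x - \<epsilon> * h x) \<subseteq> {s1..s2}"
proof -
  define phi where "phi = (\<lambda>y. u y + g y)"
  define V where "V = vex phi"
  have cxu: "cx X u" and contu: "continuous_on X u" using cv by (auto simp: cvx_def convex_on_imp_cx)
  have ufam: "u \<in> fam phi" using cv g0 by (auto simp: fam_def phi_def cvx_def)
  hence ne: "fam phi \<noteq> {}" by auto
  have Vle: "V x \<le> u x + g x" if "x\<in>X" for x using vex_le[OF ne that] by (simp add: V_def phi_def)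
  have Vge: "u x \<le> V x" if "x\<in>X" for x using vex_upper[OF ufam that] by (simp add: V_def)
  have cvV: "convex_on X V" using vex_convex[OF ne] by (simp add: V_def)
  have V0: "V 0 = u 0" using Vle[of 0] Vge[of 0] g01 by simp
  have V1: "V 1 = u 1" using Vle[of 1] Vge[of 1] g01 by simp
  have contV: "continuous_on X V" using cont_from_convex[OF cvV contu] Vge V0 V1 by auto
  have cxV: "cx X V" using cvV by (rule convex_on_imp_cx)
  have cxw: "cx X (\<lambda>x. 2 * u x - V x)" using w_convex[OF cxu g0 psi] by (simp add: V_def phi_def)
  have h: "h x = V x - u x" for x by (simp add: hdef V_def phi_def)
  have e0: "0 \<le> \<epsilon>" and e1: "\<epsilon> \<le> 1" using e by auto
  have SB0: "u 0 + s1 * y \<le> u y" if "y \<in> X" for y using SB that unfolding SB_def by force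
  have SB1: "u 1 - s2 * (1 - y) \<le> u y" if "y \<in> X" for y using SB that unfolding SB_def by force
  have conv: "convex X" by (simp add: convex_real_interval)
  have eqp: "u x + \<epsilon> * h x = (1 - \<epsilon>) * u x + \<epsilon> * V x + 0 * x + 0" for x by (simp add: h algebra_simps)
  have cxp: "cx X (\<lambda>x. u x + \<epsilon> * h x)"
    using cx_comb[OF cxu cxV, of "1 - \<epsilon>" \<epsilon> 0 0] e0 e1 by (intro cx_cong[OF _ eqp[symmetric]]) auto
  have "continuous_on X (\<lambda>x. u x + \<epsilon> * (V x - u x))" using contu contV by (intro continuous_intros)
  hence cvp: "cvx (\<lambda>x. u x + \<epsilon> * h x)" unfolding cvx_def
    using cx_imp_convex_on[OF cxp conv] by (simp add: h)
  have hge: "0 \<le> h y" if "y \<in> X" for y using Vge[OF that] by (simp add: h)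
  have hz: "h 0 = 0" "h 1 = 0" using V0 V1 by (simp_all add: h)
  have sdp: "subdiff_X (\<lambda>x. u x + \<epsilon> * h x) \<subseteq> {s1..s2}"
  proof (rule GLsub)
    show "\<forall>y\<in>X. u 0 + \<epsilon> * h 0 + s1 * y \<le> u y + \<epsilon> * h y"
    proof
      fix y assume y: "y \<in> X"
      have "0 \<le> \<epsilon> * h y" using hge[OF y] e0 by simp
      thus "u 0 + \<epsilon> * h 0 + s1 * y \<le> u y + \<epsilon> * h y" using SB0[OF y] by (simp add: hz)
    qed
    show "\<forall>y\<in>X. u 1 + \<epsilon> * h 1 - s2 * (1 - y) \<le> u y + \<epsilon> * h y"
    proof
      fix y assume y: "y \<in> X"
      have "0 \<le> \<epsilon> * h y" using hge[OF y] e0 by simp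
      thus "u 1 + \<epsilon> * h 1 - s2 * (1 - y) \<le> u y + \<epsilon> * h y" using SB1[OF y] by (simp add: hz)
    qed
  qed
  have eqm: "u x - \<epsilon> * h x = (1 - \<epsilon>) * u x + \<epsilon> * (2 * u x - V x) + 0 * x + 0" for x
    by (simp add: h algebra_simps)
  have cxm: "cx X (\<lambda>x. u x - \<epsilon> * h x)"
    using cx_comb[OF cxu cxw, of "1 - \<epsilon>" \<epsilon> 0 0] e0 e1 by (intro cx_cong[OF _ eqm[symmetric]]) auto
  have "continuous_on X (\<lambda>x. u x - \<epsilon> * (V x - u x))" using contu contV by (intro continuous_intros)
  hence cvm: "cvx (\<lambda>x. u x - \<epsilon> * h x)" unfolding cvx_def
    using cx_imp_convex_on[OF cxm conv] by (simp add: h)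
  have mlow: "u y - g y \<le> u y - \<epsilon> * h y" if "y \<in> X" for y
  proof -
    have "\<epsilon> * h y \<le> h y" using mult_left_le_one_le[OF hge[OF that] e0 e1] .
    thus ?thesis using Vle[OF that] by (simp add: h)
  qed
  have sdm: "subdiff_X (\<lambda>x. u x - \<epsilon> * h x) \<subseteq> {s1..s2}"
  proof (rule GLsub)
    show "\<forall>y\<in>X. u 0 - \<epsilon> * h 0 + s1 * y \<le> u y - \<epsilon> * h y"
    proof
      fix y assume y: "y \<in> X"
      have "u 0 + s1 * y \<le> u y - g y" using pb y by blast
      thus "u 0 - \<epsilon> * h 0 + s1 * y \<le> u y - \<epsilon> * h y" using mlow[OF y] by (simp add: hz)
    qed
    show "\<forall>y\<in>X. u 1 - \<epsilon> * h 1 - s2 * (1 - y) \<le> u y - \<epsilon> * h y"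
    proof
      fix y assume y: "y \<in> X"
      have "u 1 - s2 * (1 - y) \<le> u y - g y" using pb y by blast
      thus "u 1 - \<epsilon> * h 1 - s2 * (1 - y) \<le> u y - \<epsilon> * h y" using mlow[OF y] by (simp add: hz)
    qed
  qed
  show ?thesis using cvp sdp cvm sdm by blast
qed

lemma SBD: "SB u s1 s2 \<Longrightarrow> x \<in> X \<Longrightarrow> y \<in> X \<Longrightarrow> x \<le> y \<Longrightarrow>
   s1*(y-x) \<le> u y - u x \<and> u y - u x \<le> s2*(y-x)"
  unfolding SB_def by blast

lemma tangent_facts:
  assumes cxu: "cx X u" and SB: "SB u s1 s2" and ab: "0 \<le> a" "a < b" "b \<le> 1"
  shows "\<forall>x\<in>X. u a + rderiv u a * (x - a) \<le> u x"
    and "\<forall>x\<in>X. u b + lderiv u b * (x - b) \<le> u x"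
    and "\<forall>x y. a \<le> x \<longrightarrow> x \<le> y \<longrightarrow> y \<le> 1 \<longrightarrow> rderiv u a * (y - x) \<le> u y - u x"
    and "\<forall>x y. 0 \<le> x \<longrightarrow> x \<le> y \<longrightarrow> y \<le> b \<longrightarrow> u y - u x \<le> lderiv u b * (y - x)"
    and "s1 \<le> rderiv u a" and "lderiv u b \<le> s2"
proof -
  have a1: "a < 1" and b0: "0 < b" using ab by auto
  note R = rderiv_props[OF cxu SB ab(1) a1]
  note L = lderiv_props[OF cxu SB b0 ab(3)]
  define r where "r = rderiv u a"
  define l where "l = lderiv u b"
  show "s1 \<le> rderiv u a" by (rule R(4))
  show "lderiv u b \<le> s2" by (rule L(3))
  show "\<forall>x\<in>X. u a + rderiv u a * (x - a) \<le> u x"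
  proof
    fix x assume x: "x \<in> X"
    consider "x < a" | "x = a" | "a < x" by linarith
    thus "u a + rderiv u a * (x - a) \<le> u x"
    proof cases
      case 1
      have "sl u x a \<le> rderiv u a" using R(3)[of x] x 1 by auto
      hence "(u a - u x) \<le> rderiv u a * (a - x)" using 1 by (simp add: sl_def divide_le_eq)
      thus ?thesis by (simp add: algebra_simps)
    next
      case 2 thus ?thesis by simp
    next
      case 3
      have "rderiv u a \<le> sl u a x" using R(2)[of x] x 3 by auto
      hence "rderiv u a * (x - a) \<le> u x - u a" using 3 by (simp add: sl_def le_divide_eq)
      thus ?thesis by simp
    qed
  qed
  show "\<forall>x\<in>X. u b + lderiv u b * (x - b) \<le> u x"
  proof
    fix x assume x: "x \<in> X"
    consider "x < b" | "x = b" | "b < x" by linarith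
    thus "u b + lderiv u b * (x - b) \<le> u x"
    proof cases
      case 1
      have "sl u x b \<le> lderiv u b" using L(1)[of x] x 1 by auto
      hence "(u b - u x) \<le> lderiv u b * (b - x)" using 1 by (simp add: sl_def divide_le_eq)
      thus ?thesis by (simp add: algebra_simps)
    next
      case 2 thus ?thesis by simp
    next
      case 3
      have "lderiv u b \<le> sl u b x" using L(2)[of x] x 3 by auto
      hence "lderiv u b * (x - b) \<le> u x - u b" using 3 by (simp add: sl_def le_divide_eq)
      thus ?thesis by simp
    qed
  qed
  show "\<forall>x y. a \<le> x \<longrightarrow> x \<le> y \<longrightarrow> y \<le> 1 \<longrightarrow> rderiv u a * (y - x) \<le> u y - u x"
  proof (intro allI impI)
    fix x y assume xy: "a \<le> x" "x \<le> y" "y \<le> 1"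
    show "rderiv u a * (y - x) \<le> u y - u x"
    proof (cases "x = y")
      case True thus ?thesis by simp
    next
      case False
      hence xy': "x < y" using xy by simp
      have "rderiv u a \<le> sl u x y"
      proof (cases "x = a")
        case True thus ?thesis using R(2)[of y] xy' xy by auto
      next
        case False
        hence "a < x" using xy by simp
        hence "sl u a y \<le> sl u x y" using cx_sl(2)[OF cxu, of a x y] xy xy' ab by auto
        moreover have "rderiv u a \<le> sl u a y" using R(2)[of y] xy' xy by auto
        ultimately show ?thesis by simp
      qed
      thus ?thesis using xy' by (simp add: sl_def le_divide_eq)
    qed
  qed
  show "\<forall>x y. 0 \<le> x \<longrightarrow> x \<le> y \<longrightarrow> y \<le> b \<longrightarrow> u y - u x \<le> lderiv u b * (y - x)"
  proof (intro allI impI)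
    fix x y assume xy: "0 \<le> x" "x \<le> y" "y \<le> b"
    show "u y - u x \<le> lderiv u b * (y - x)"
    proof (cases "x = y")
      case True thus ?thesis by simp
    next
      case False
      hence xy': "x < y" using xy by simp
      have "sl u x y \<le> lderiv u b"
      proof (cases "y = b")
        case True thus ?thesis using L(1)[of x] xy' xy by auto
      next
        case False
        hence "y < b" using xy by simp
        hence "sl u x y \<le> sl u x b" using cx_sl(1)[OF cxu, of x y b] xy xy' ab by auto
        moreover have "sl u x b \<le> lderiv u b" using L(1)[of x] xy' xy by auto
        ultimately show ?thesis by simp
      qed
      thus ?thesis using xy' by (simp add: sl_def divide_le_eq)
    qed
  qed
qed

lemma g_facts:
  assumes cxu: "cx X u" and SB: "SB u s1 s2" and ab: "0 \<le> a" "a < b" "b \<le> 1"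
  shows "\<forall>x\<in>X. 0 \<le> g_ab u a b x"
    and "g_ab u a b 0 = 0" "g_ab u a b 1 = 0"
    and "cx X (\<lambda>x. u x - g_ab u a b x)"
    and "\<forall>y\<in>X. u 0 + s1 * y \<le> u y - g_ab u a b y \<and> u 1 - s2 * (1 - y) \<le> u y - g_ab u a b y"
proof -
  note T = tangent_facts[OF cxu SB ab]
  define r where "r = rderiv u a"
  define l where "l = lderiv u b"
  define m where "m x = max (u a + r * (x - a)) (u b + l * (x - b))" for x
  have gdef: "g_ab u a b x = (if x \<in> {a..b} then u x - m x else 0)" for x
    by (simp add: g_ab_def m_def t_right_def t_left_def r_def l_def)
  have mle: "m x \<le> u x" if "x \<in> X" for x using T(1,2) that by (auto simp: m_def r_def l_def)
  have "u b + l * (a - b) \<le> u a" using bspec[OF T(2), of a] ab by (simp add: l_def)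
  hence ma: "m a = u a" by (simp add: m_def max_def)
  have "u a + r * (b - a) \<le> u b" using bspec[OF T(1), of b] ab by (simp add: r_def)
  hence mb: "m b = u b" by (simp add: m_def max_def)
  show "\<forall>x\<in>X. 0 \<le> g_ab u a b x" using mle by (simp add: gdef)
  show "g_ab u a b 0 = 0" using ma ab by (auto simp: gdef)
  show "g_ab u a b 1 = 0" using mb ab by (auto simp: gdef)
  have psi: "u x - g_ab u a b x = (if x \<in> {a..b} then m x else u x)" for x by (simp add: gdef)
  have cxA: "cx X (\<lambda>x. u a + r * (x - a))"
    using cx_affine[of X r "u a - r * a"] by (rule cx_cong) (simp add: algebra_simps)
  have cxB: "cx X (\<lambda>x. u b + l * (x - b))"
    using cx_affine[of X l "u b - l * b"] by (rule cx_cong) (simp add: algebra_simps)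
  have cxm: "cx X m" unfolding m_def by (rule cx_max[OF cxA cxB])
  define G1 where "G1 s = (if s \<in> {0..a} then max (m s) (u s) else m s)" for s
  have cxG1: "cx X G1" unfolding G1_def
    by (rule glue[OF cxm]) (use ab ma cx_subset[OF cxu, of "{0..a}"] in auto)
  have G1b: "G1 b = m b" using ab by (simp add: G1_def)
  define G2 where "G2 s = (if s \<in> {b..1} then max (G1 s) (u s) else G1 s)" for s
  have cxG2: "cx X G2" unfolding G2_def
    by (rule glue[OF cxG1]) (use ab mb G1b cx_subset[OF cxu, of "{b..1}"] in auto)
  show "cx X (\<lambda>x. u x - g_ab u a b x)"
  proof (rule cx_cong[OF cxG2])
    fix x assume x: "x \<in> X"
    consider "x < a" | "x = a" | "a < x \<and> x < b" | "x = b" | "b < x" by linarith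
    thus "G2 x = u x - g_ab u a b x"
    proof cases
      case 1 thus ?thesis using x mle[OF x] ab by (simp add: G2_def G1_def psi max_def)
    next
      case 2 thus ?thesis using x ma ab by (simp add: G2_def G1_def psi max_def)
    next
      case 3 thus ?thesis using x by (simp add: G2_def G1_def psi)
    next
      case 4 thus ?thesis using x mb ab by (simp add: G2_def G1_def psi max_def)
    next
      case 5 thus ?thesis using x mle[OF x] ab by (simp add: G2_def G1_def psi max_def)
    qed
  qed
  show "\<forall>y\<in>X. u 0 + s1 * y \<le> u y - g_ab u a b y \<and> u 1 - s2 * (1 - y) \<le> u y - g_ab u a b y"
  proof
    fix y assume y: "y \<in> X"
    have SB0: "u 0 + s1 * y \<le> u y" and SB1: "u 1 - s2 * (1 - y) \<le> u y"
      using SB y unfolding SB_def by force+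
    show "u 0 + s1 * y \<le> u y - g_ab u a b y \<and> u 1 - s2 * (1 - y) \<le> u y - g_ab u a b y"
    proof (cases "y \<in> {a..b}")
      case False
      hence "u y - g_ab u a b y = u y" unfolding psi by (rule if_not_P)
      thus ?thesis using SB0 SB1 by simp
    next
      case True
      have ya: "a \<le> y" "y \<le> b" using True by auto
      have "s1 * (y - a) \<le> r * (y - a)" using T(5) ya by (intro mult_right_mono) (auto simp: r_def)
      moreover have "s1 * (a - 0) \<le> u a - u 0" using SBD[OF SB, of 0 a] ab by auto
      moreover have "u a + r * (y - a) \<le> m y" by (simp add: m_def)
      ultimately have 1: "u 0 + s1 * y \<le> m y" by (simp add: algebra_simps)
      have "l * (b - y) \<le> s2 * (b - y)" using T(6) ya by (intro mult_right_mono) (auto simp: l_def)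
      moreover have "u 1 - u b \<le> s2 * (1 - b)" using SBD[OF SB, of b 1] ab by auto
      moreover have "u b + l * (y - b) \<le> m y" by (simp add: m_def)
      ultimately have 2: "u 1 - s2 * (1 - y) \<le> m y" by (simp add: algebra_simps)
      show ?thesis using 1 2 True by (simp add: psi)
    qed
  qed
qed

locale absetup =
  fixes u :: "real \<Rightarrow> real" and s1 s2 a b :: real
  assumes cv: "cvx u" and SBu: "SB u s1 s2" and ab: "0 \<le> a" "a < b" "b \<le> 1"
begin

definition "rA = rderiv u a"
definition "lB = lderiv u b"
definition "gg = g_ab u a b"
definition "ph = (\<lambda>y. u y + gg y)"
definition "VV = vex ph"

lemma cxu: "cx X u" using cv by (simp add: cvx_def convex_on_imp_cx)
lemma contu: "continuous_on X u" using cv by (simp add: cvx_def)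

lemmas T = tangent_facts[OF cxu SBu ab, folded rA_def lB_def]
lemmas GF = g_facts[OF cxu SBu ab, folded gg_def]

lemma gdef: "gg x = (if x \<in> {a..b} then u x - max (u a + rA * (x - a)) (u b + lB * (x - b)) else 0)"
  by (simp add: gg_def g_ab_def t_right_def t_left_def rA_def lB_def)

lemma gnn: "x \<in> X \<Longrightarrow> 0 \<le> gg x" using GF(1) by blast

lemma ufam: "u \<in> fam ph" using cv gnn by (auto simp: fam_def ph_def cvx_def)
lemma fne: "fam ph \<noteq> {}" using ufam by auto
lemma Vge: "x \<in> X \<Longrightarrow> u x \<le> VV x" using vex_upper[OF ufam] by (simp add: VV_def)
lemma Vle: "x \<in> X \<Longrightarrow> VV x \<le> u x + gg x" using vex_le[OF fne] by (simp add: VV_def ph_def)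
lemma Vupper: "G \<in> fam ph \<Longrightarrow> x \<in> X \<Longrightarrow> G x \<le> VV x" using vex_upper by (simp add: VV_def)
lemma cxV: "cx X VV" using vex_convex[OF fne] unfolding VV_def by (rule convex_on_imp_cx)

lemma gcont: "continuous_on {a..b} gg"
proof -
  have "continuous_on {a..b} (\<lambda>x. u x - max (u a + rA * (x - a)) (u b + lB * (x - b)))"
    using continuous_on_subset[OF contu, of "{a..b}"] ab by (intro continuous_intros) auto
  thus ?thesis by (rule continuous_on_cong[THEN iffD1, rotated 2]) (auto simp: gdef)
qed

lemma gpos: assumes "x \<in> {a..b}" "0 < gg x"
  shows "u a + rA * (x - a) < u x" "u b + lB * (x - b) < u x"
  using assms by (auto simp: gdef)

lemma gpos_iff: assumes "x \<in> {a..b}"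
  shows "0 < gg x \<longleftrightarrow> (u a + rA * (x - a) < u x \<and> u b + lB * (x - b) < u x)"
  using assms by (auto simp: gdef)

lemma Jint: assumes "x1 \<in> {a..b}" "x2 \<in> {a..b}" "x1 \<le> x" "x \<le> x2" "0 < gg x1" "0 < gg x2"
  shows "0 < gg x"
proof -
  have x: "x \<in> {a..b}" using assms by auto
  have 1: "rA * (x - x1) \<le> u x - u x1" by (intro T(3)[rule_format]) (use assms ab in auto)
  have 2: "u x2 - u x \<le> lB * (x2 - x)" by (intro T(4)[rule_format]) (use assms ab in auto)
  have "u a + rA * (x1 - a) < u x1" using gpos(1)[OF assms(1,5)] .
  hence A: "u a + rA * (x - a) < u x" using 1 by (simp add: algebra_simps)
  have "u b + lB * (x2 - b) < u x2" using gpos(2)[OF assms(2,6)] .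
  hence B: "u b + lB * (x - b) < u x" using 2 by (simp add: algebra_simps)
  show ?thesis using gpos_iff[OF x] A B by simp
qed

lemma ga: "gg a = 0" and gb: "gg b = 0"
proof -
  have "u b + lB * (a - b) \<le> u a" using bspec[OF T(2), of a] ab by simp
  thus "gg a = 0" using ab by (simp add: gdef max_def)
  have "u a + rA * (b - a) \<le> u b" using bspec[OF T(1), of b] ab by simp
  thus "gg b = 0" using ab by (simp add: gdef max_def)
qed

end

context absetup begin

lemma affine_on_J:
  assumes Veq: "\<forall>x\<in>X. VV x = u x"
    and xz: "x \<in> {a..b}" "z \<in> {a..b}" "x < z" "0 < gg x" "0 < gg z"
  shows "\<forall>s\<in>{x..z}. u s = u x + (u z - u x) / (z - x) * (s - x)"
proof -
  have zx: "z - x > 0" using xz by simp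
  have sub: "{x..z} \<subseteq> {a..b}" using xz by auto
  have subX: "{x..z} \<subseteq> X" using xz ab by auto
  have gposJ: "0 < gg s" if "s \<in> {x..z}" for s using Jint[OF xz(1,2) _ _ xz(4,5)] that by auto
  obtain s0 where s0: "s0 \<in> {x..z}" "\<forall>s\<in>{x..z}. gg s0 \<le> gg s"
    using continuous_attains_inf[OF compact_Icc _ continuous_on_subset[OF gcont sub]] xz by auto
  define \<delta> where "\<delta> = gg s0"
  have dpos: "0 < \<delta>" using gposJ[OF s0(1)] \<delta>_def by simp
  define p where "p = (u z - u x)/(z - x)"
  define C where "C s = u x + p * (s - x)" for s
  have contD: "continuous_on {x..z} (\<lambda>s. C s - u s)"
    using continuous_on_subset[OF contu subX] unfolding C_def by (intro continuous_intros) auto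
  obtain s1 where s1: "s1 \<in> {x..z}" "\<forall>s\<in>{x..z}. C s - u s \<le> C s1 - u s1"
    using continuous_attains_sup[OF compact_Icc _ contD] xz by auto
  define M where "M = C s1 - u s1"
  have Cx: "C x = u x" by (simp add: C_def)
  have Cz: "C z = u z" using zx by (simp add: C_def p_def)
  have xX: "x \<in> X" "z \<in> X" using xz ab by auto
  have M_le: "M \<le> 0"
  proof (rule ccontr)
    assume "\<not> M \<le> 0" hence Mpos: "0 < M" by simp
    define \<eta> where "\<eta> = max 0 (M - \<delta>/2)"
    have eta0: "0 \<le> \<eta>" by (simp add: \<eta>_def)
    define F where "F s = C s - \<eta>" for s
    define q where "q = u x - p * x - \<eta>"
    have Fcx: "cx {x..z} F" using cx_affine[of "{x..z}" p q]
      by (rule cx_cong) (simp add: F_def C_def q_def algebra_simps)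
    define G where "G s = (if s \<in> {x..z} then max (VV s) (F s) else VV s)" for s
    have Fx: "F x \<le> VV x" using Veq xX eta0 Cx by (simp add: F_def)
    have Fz: "F z \<le> VV z" using Veq xX eta0 Cz by (simp add: F_def)
    have Gcx: "cx X G" unfolding G_def
      by (rule glue[OF cxV _ _ _ Fcx]) (use xz ab Fx Fz in auto)
    have Gfam: "G \<in> fam ph" unfolding fam_def
    proof (intro CollectI conjI ballI)
      show "convex_on X G" using Gcx by (rule cx_imp_convex_on) (simp add: convex_real_interval)
      fix s assume s: "s \<in> X"
      show "G s \<le> ph s"
      proof (cases "s \<in> {x..z}")
        case True
        have "C s - u s \<le> M" using s1(2) True M_def by auto
        moreover have "M - \<eta> \<le> \<delta>/2" unfolding \<eta>_def by (simp add: max_def)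
        moreover have "\<delta> \<le> gg s" using s0(2) True \<delta>_def by auto
        ultimately have "F s \<le> u s + gg s" unfolding F_def using dpos by linarith
        moreover have "G s = max (VV s) (F s)" using True by (simp add: G_def)
        ultimately show ?thesis using Vle[OF s] by (simp add: ph_def)
      next
        case False
        hence "G s = VV s" unfolding G_def by (rule if_not_P)
        thus ?thesis using Vle[OF s] by (simp add: ph_def)
      qed
    qed
    have s1X: "s1 \<in> X" using s1 subX by auto
    have "G s1 \<le> VV s1" using Vupper[OF Gfam s1X] .
    moreover have "F s1 \<le> G s1" using s1(1) by (simp add: G_def)
    ultimately have "C s1 - \<eta> \<le> u s1" using Veq s1X by (simp add: F_def)
    hence "M \<le> \<eta>" by (simp add: M_def)
    moreover have "\<eta> < M" using Mpos dpos by (simp add: \<eta>_def max_def)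
    ultimately show False by simp
  qed
  show ?thesis
  proof
    fix s assume s: "s \<in> {x..z}"
    have "C s - u s \<le> 0" using s1(2) s M_le M_def by force
    moreover have "u s \<le> C s"
    proof (cases "s = x \<or> s = z")
      case True thus ?thesis using Cx Cz by auto
    next
      case False hence xs: "x < s" "s < z" using s by auto
      hence "u s * (z - x) \<le> u x * (z - s) + u z * (s - x)" using cxD[OF cxu, of x s z] xX s subX by auto
      also have "\<dots> = C s * (z - x)" using zx unfolding C_def p_def by (simp add: field_simps)
      finally show ?thesis using zx by simp
    qed
    ultimately show "u s = u x + (u z - u x) / (z - x) * (s - x)" unfolding C_def p_def by simp
  qed
qed

lemma max3_eq1: "A \<le> (C::real) \<Longrightarrow> B \<le> C \<Longrightarrow> max A (max B C) = C" by simp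
lemma max3_eq2: "(C::real) \<le> max A B \<Longrightarrow> max A (max B C) = max A B" by (simp add: max.assoc[symmetric] max.absorb1)

lemma dir1:
  assumes Veq: "\<forall>x\<in>X. VV x = u x"
  shows "\<exists>m0 c0 m1 c1 m2 c2 :: real. \<forall>x\<in>{a..b}.
          u x = max (m0 * x + c0) (max (m1 * x + c1) (m2 * x + c2))"
proof (cases "\<exists>y0\<in>{a..b}. 0 < gg y0")
  case False
  have "\<forall>x\<in>{a..b}. u x = max (rA * x + (u a - rA * a)) (max (lB * x + (u b - lB * b)) (lB * x + (u b - lB * b)))"
  proof
    fix x assume x: "x \<in> {a..b}"
    have "\<not> 0 < gg x" using False x by blast
    hence "gg x \<le> 0" by simp
    moreover have "0 \<le> gg x" using gnn x ab by auto
    ultimately have "gg x = 0" by simp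
    hence "u x = max (u a + rA * (x - a)) (u b + lB * (x - b))" using x by (simp add: gdef)
    thus "u x = max (rA * x + (u a - rA * a)) (max (lB * x + (u b - lB * b)) (lB * x + (u b - lB * b)))"
      by (simp add: algebra_simps)
  qed
  thus ?thesis by blast
next
  case True
  then obtain y0 where y0: "y0 \<in> {a..b}" "0 < gg y0" by blast
  have y0b: "y0 < b" using y0 gb by (cases "y0 = b") auto
  have "\<forall>x\<in>{a..b}. \<forall>e>0. \<exists>d>0. \<forall>x'\<in>{a..b}. dist x' x < d \<longrightarrow> dist (gg x') (gg x) < e"
    using gcont unfolding continuous_on_iff .
  from this[rule_format, OF y0(1) y0(2)]
  obtain d where d: "d > 0" "\<forall>x'\<in>{a..b}. dist x' y0 < d \<longrightarrow> dist (gg x') (gg y0) < gg y0"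
    by blast
  define y1 where "y1 = y0 + min (d/2) (b - y0)"
  have mm: "0 < min (d/2) (b - y0)" "min (d/2) (b - y0) \<le> b - y0" "min (d/2) (b - y0) < d"
    using d y0b by auto
  have y1: "y1 \<in> {a..b}" "y0 < y1" using y0 mm unfolding y1_def by auto
  have "dist y1 y0 < d" using mm unfolding y1_def dist_real_def by simp
  hence "dist (gg y1) (gg y0) < gg y0" using d y1 by auto
  hence gy1: "0 < gg y1" by (simp add: dist_real_def)
  define k where "k = (u y1 - u y0) / (y1 - y0)"
  define L where "L t = u y0 + k * (t - y0)" for t
  have y10: "y1 - y0 \<noteq> 0" using y1 by simp
  have Ly1: "u y1 = L y1" unfolding L_def k_def using y10 by simp
  have onJ: "u t = L t" if t: "t \<in> {a..b}" "0 < gg t" for t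
  proof -
    define p where "p = min y0 t"
    define q where "q = max y1 t"
    have pa: "p \<in> {a..b}" "0 < gg p" using y0 t unfolding p_def min_def by auto
    have qa: "q \<in> {a..b}" "0 < gg q" using y1 t gy1 unfolding q_def max_def by auto
    have py0: "p \<le> y0" and y1q: "y1 \<le> q" and pt: "p \<le> t" and tq: "t \<le> q"
      unfolding p_def q_def by auto
    hence "p < q" using y1 by simp
    note pq = pa(1) qa(1) this pa(2) qa(2)
    define K where "K = (u q - u p) / (q - p)"
    have aff: "\<forall>s\<in>{p..q}. u s = u p + K * (s - p)" unfolding K_def by (rule affine_on_J[OF Veq pq])
    have e0: "u y0 = u p + K * (y0 - p)" using bspec[OF aff, of y0] py0 y1q y1 by simp
    have e1: "u y1 = u p + K * (y1 - p)" using bspec[OF aff, of y1] py0 y1q y1 by simp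
    have et: "u t = u p + K * (t - p)" using bspec[OF aff, of t] pt tq by simp
    have d1: "u y1 - u y0 = K * (y1 - y0)" using e0 e1 by (simp add: algebra_simps)
    have "k = K * (y1 - y0) / (y1 - y0)" unfolding k_def d1 ..
    hence "k = K" using y10 by simp
    thus ?thesis using e0 et by (simp add: L_def algebra_simps)
  qed
  have below: "L t \<le> u t" if t: "t \<in> {a..b}" for t
  proof -
    consider "t < y0" | "y0 \<le> t \<and> t \<le> y1" | "y1 < t" by linarith
    thus ?thesis
    proof cases
      case 1
      have "sl u t y0 \<le> sl u y0 y1" using cx_sl(3)[OF cxu, of t y0 y1] 1 t y0 y1 ab by auto
      hence "(u y0 - u t)/(y0 - t) \<le> k" by (simp add: sl_def k_def)
      hence "u y0 - u t \<le> k * (y0 - t)" using 1 by (simp add: divide_le_eq)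
      thus ?thesis by (simp add: L_def algebra_simps)
    next
      case 2
      have "0 < gg t" using Jint[of y0 y1 t] y0 y1 gy1 2 by auto
      thus ?thesis using onJ t by simp
    next
      case 3
      have "sl u y0 y1 \<le> sl u y1 t" using cx_sl(3)[OF cxu, of y0 y1 t] 3 t y0 y1 ab by auto
      hence "k \<le> (u t - u y1)/(t - y1)" by (simp add: sl_def k_def)
      hence "k * (t - y1) \<le> u t - u y1" using 3 by (simp add: le_divide_eq)
      thus ?thesis using Ly1 by (simp add: L_def algebra_simps)
    qed
  qed
  have "\<forall>x\<in>{a..b}. u x = max (rA * x + (u a - rA * a)) (max (lB * x + (u b - lB * b)) (k * x + (u y0 - k * y0)))"
  proof
    fix x assume x: "x \<in> {a..b}"
    have A: "u a + rA * (x - a) \<le> u x" using bspec[OF T(1), of x] x ab by auto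
    have B: "u b + lB * (x - b) \<le> u x" using bspec[OF T(2), of x] x ab by auto
    have e1: "rA * x + (u a - rA * a) = u a + rA * (x - a)" by (simp add: algebra_simps)
    have e2: "lB * x + (u b - lB * b) = u b + lB * (x - b)" by (simp add: algebra_simps)
    have e3: "k * x + (u y0 - k * y0) = L x" by (simp add: L_def algebra_simps)
    show "u x = max (rA * x + (u a - rA * a)) (max (lB * x + (u b - lB * b)) (k * x + (u y0 - k * y0)))"
      unfolding e1 e2 e3
    proof (cases "0 < gg x")
      case True thus "u x = max (u a + rA * (x - a)) (max (u b + lB * (x - b)) (L x))"
        using onJ[OF x True] A B by (simp add: max3_eq1)
    next
      case False
      hence "gg x = 0" using gnn[of x] x ab by force
      hence "u x = max (u a + rA * (x - a)) (u b + lB * (x - b))" using x by (simp add: gdef)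
      thus "u x = max (u a + rA * (x - a)) (max (u b + lB * (x - b)) (L x))"
        using below[OF x] by (simp add: max3_eq2)
    qed
  qed
  thus ?thesis by blast
qed

end

lemma piece_right:
  fixes P :: "nat \<Rightarrow> real \<Rightarrow> real" and M Cc :: "nat \<Rightarrow> real"
  assumes K: "finite K" "K \<noteq> {}" and P: "\<And>i x. P i x = M i * x + Cc i" and ab: "a < b"
    and rep: "\<And>x. x \<in> {a..b} \<Longrightarrow> (\<forall>i\<in>K. P i x \<le> u x) \<and> (\<exists>i\<in>K. P i x = u x)"
  shows "\<exists>i\<in>K. P i a = u a \<and> rderiv u a = M i"
proof -
  define I where "I = {i\<in>K. P i a = u a}"
  have Ifin: "finite I" using K by (simp add: I_def)
  have Ine: "I \<noteq> {}" using rep[of a] ab by (auto simp: I_def)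
  define mx where "mx = Max (M ` I)"
  have "mx \<in> M ` I" unfolding mx_def using Ifin Ine by simp
  then obtain i where i: "i \<in> I" "M i = mx" by (metis imageE)
  have imax: "M j \<le> M i" if "j \<in> I" for j using Max_ge[of "M ` I" "M j"] Ifin that i by (auto simp: mx_def)
  have iK: "i \<in> K" and ia: "P i a = u a" using i by (auto simp: I_def)
  have ev1: "\<forall>j\<in>K. eventually (\<lambda>t. P j t \<le> P i t) (at_right a)"
  proof
    fix j assume j: "j \<in> K"
    show "eventually (\<lambda>t. P j t \<le> P i t) (at_right a)"
    proof (cases "j \<in> I")
      case True
      hence ja: "P j a = u a" by (simp add: I_def)
      show ?thesis using eventually_at_right_less[of a]
      proof eventually_elim
        case (elim t)
        have "M j * (t - a) \<le> M i * (t - a)" using imax[OF True] elim by (intro mult_right_mono) auto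
        moreover have "P j t = P j a + M j * (t - a)" "P i t = P i a + M i * (t - a)"
          by (simp_all add: P algebra_simps)
        ultimately show ?case using ja ia by simp
      qed
    next
      case False
      have "P j a \<le> u a" using rep[of a] ab j by auto
      moreover have "P j a \<noteq> u a" using False j by (simp add: I_def)
      ultimately have lt: "0 < P i a - P j a" using ia by simp
      have "((\<lambda>t. M i * t + Cc i - (M j * t + Cc j)) \<longlongrightarrow> M i * a + Cc i - (M j * a + Cc j)) (at_right a)"
        by (intro tendsto_intros)
      hence "((\<lambda>t. P i t - P j t) \<longlongrightarrow> P i a - P j a) (at_right a)" by (simp add: P)
      from order_tendstoD(1)[OF this lt]
      show ?thesis by eventually_elim simp
    qed
  qed
  have ev: "eventually (\<lambda>t. \<forall>j\<in>K. P j t \<le> P i t) (at_right a)"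
    using eventually_ball_finite[OF K(1) ev1] .
  have ua: "u a = M i * a + Cc i" using ia by (simp add: P)
  have ev2: "eventually (\<lambda>t. (u t - u a) / (t - a) = M i) (at_right a)"
    using ev eventually_at_right_real[OF ab]
  proof eventually_elim
    case (elim t)
    hence t: "t \<in> {a..b}" "a < t" by auto
    obtain j where j: "j \<in> K" "P j t = u t" using rep[OF t(1)] by auto
    have "P i t \<le> u t" using rep[OF t(1)] iK by auto
    moreover have "P j t \<le> P i t" using elim j by auto
    ultimately have "u t = P i t" using j by simp
    hence "u t - u a = M i * (t - a)" using ua by (simp add: P algebra_simps)
    thus ?case using t by simp
  qed
  have "rderiv u a = M i" unfolding rderiv_def
    using tendsto_Lim[OF trivial_limit_at_right_real tendsto_eventually[OF ev2]] .
  thus ?thesis using iK ia by blast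
qed

lemma piece_left:
  fixes P :: "nat \<Rightarrow> real \<Rightarrow> real" and M Cc :: "nat \<Rightarrow> real"
  assumes K: "finite K" "K \<noteq> {}" and P: "\<And>i x. P i x = M i * x + Cc i" and ab: "a < b"
    and rep: "\<And>x. x \<in> {a..b} \<Longrightarrow> (\<forall>i\<in>K. P i x \<le> u x) \<and> (\<exists>i\<in>K. P i x = u x)"
  shows "\<exists>i\<in>K. P i b = u b \<and> lderiv u b = M i"
proof -
  define I where "I = {i\<in>K. P i b = u b}"
  have Ifin: "finite I" using K by (simp add: I_def)
  have Ine: "I \<noteq> {}" using rep[of b] ab by (auto simp: I_def)
  define mn where "mn = Min (M ` I)"
  have "mn \<in> M ` I" unfolding mn_def using Ifin Ine by simp
  then obtain i where i: "i \<in> I" "M i = mn" by (metis imageE)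
  have imin: "M i \<le> M j" if "j \<in> I" for j using Min_le[of "M ` I" "M j"] Ifin that i by (auto simp: mn_def)
  have iK: "i \<in> K" and ib: "P i b = u b" using i by (auto simp: I_def)
  have ev1: "\<forall>j\<in>K. eventually (\<lambda>t. P j t \<le> P i t) (at_left b)"
  proof
    fix j assume j: "j \<in> K"
    show "eventually (\<lambda>t. P j t \<le> P i t) (at_left b)"
    proof (cases "j \<in> I")
      case True
      hence jb: "P j b = u b" by (simp add: I_def)
      show ?thesis using eventually_at_left_real[OF ab]
      proof eventually_elim
        case (elim t)
        have "M j * (t - b) \<le> M i * (t - b)" using imin[OF True] elim by (intro mult_right_mono_neg) auto
        moreover have "P j t = P j b + M j * (t - b)" "P i t = P i b + M i * (t - b)"
          by (simp_all add: P algebra_simps)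
        ultimately show ?case using jb ib by simp
      qed
    next
      case False
      have "P j b \<le> u b" using rep[of b] ab j by auto
      moreover have "P j b \<noteq> u b" using False j by (simp add: I_def)
      ultimately have lt: "0 < P i b - P j b" using ib by simp
      have "((\<lambda>t. M i * t + Cc i - (M j * t + Cc j)) \<longlongrightarrow> M i * b + Cc i - (M j * b + Cc j)) (at_left b)"
        by (intro tendsto_intros)
      hence "((\<lambda>t. P i t - P j t) \<longlongrightarrow> P i b - P j b) (at_left b)" by (simp add: P)
      from order_tendstoD(1)[OF this lt]
      show ?thesis by eventually_elim simp
    qed
  qed
  have ev: "eventually (\<lambda>t. \<forall>j\<in>K. P j t \<le> P i t) (at_left b)"
    using eventually_ball_finite[OF K(1) ev1] .
  have ub: "u b = M i * b + Cc i" using ib by (simp add: P)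
  have ev2: "eventually (\<lambda>t. (u t - u b) / (t - b) = M i) (at_left b)"
    using ev eventually_at_left_real[OF ab]
  proof eventually_elim
    case (elim t)
    hence t: "t \<in> {a..b}" "t < b" by auto
    obtain j where j: "j \<in> K" "P j t = u t" using rep[OF t(1)] by auto
    have "P i t \<le> u t" using rep[OF t(1)] iK by auto
    moreover have "P j t \<le> P i t" using elim j by auto
    ultimately have "u t = P i t" using j by simp
    hence "u t - u b = M i * (t - b)" using ub by (simp add: P algebra_simps)
    thus ?case using t by simp
  qed
  have "lderiv u b = M i" unfolding lderiv_def
    using tendsto_Lim[OF trivial_limit_at_left_real tendsto_eventually[OF ev2]] .
  thus ?thesis using iK ib by blast
qed

context absetup begin

lemma dir2:
  assumes rep: "\<forall>x\<in>{a..b}. u x = max (m0 * x + c0) (max (m1 * x + c1) (m2 * x + c2))"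
  shows "\<forall>x\<in>X. VV x \<le> u x"
proof -
  define M where "M i = (if i = 0 then m0 else if i = 1 then m1 else m2)" for i :: nat
  define Cc where "Cc i = (if i = 0 then c0 else if i = 1 then c1 else c2)" for i :: nat
  define P where "P i x = M i * x + Cc i" for i x
  define K where "K = {0,1,2::nat}"
  have Kfin: "finite K" "K \<noteq> {}" by (auto simp: K_def)
  have rep': "(\<forall>i\<in>K. P i x \<le> u x) \<and> (\<exists>i\<in>K. P i x = u x)" if x: "x \<in> {a..b}" for x
  proof -
    have e: "u x = max (P 0 x) (max (P 1 x) (P 2 x))" using rep x by (simp add: P_def M_def Cc_def)
    have le: "P 0 x \<le> u x" "P 1 x \<le> u x" "P 2 x \<le> u x" unfolding e by auto
    have "P 0 x = u x \<or> P 1 x = u x \<or> P 2 x = u x" unfolding e by (simp add: max_def)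
    thus ?thesis using le unfolding K_def by auto
  qed
  obtain \<alpha> where \<alpha>: "\<alpha> \<in> K" "P \<alpha> a = u a" "rA = M \<alpha>"
    using piece_right[OF Kfin P_def ab(2) rep'] unfolding rA_def by blast
  obtain \<beta> where \<beta>: "\<beta> \<in> K" "P \<beta> b = u b" "lB = M \<beta>"
    using piece_left[OF Kfin P_def ab(2) rep'] unfolding lB_def by blast
  have tA: "u a + rA * (x - a) = P \<alpha> x" for x using \<alpha> by (simp add: P_def algebra_simps)
  have tB: "u b + lB * (x - b) = P \<beta> x" for x using \<beta> by (simp add: P_def algebra_simps)
  show ?thesis
  proof (cases "\<alpha> = \<beta>")
    case True
    have g0: "gg x = 0" if x: "x \<in> X" for x
    proof (cases "x \<in> {a..b}")
      case False thus ?thesis unfolding gdef by (rule if_not_P)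
    next
      case True
      have "rA * (b - x) \<le> u b - u x" by (intro T(3)[rule_format]) (use True ab in auto)
      moreover have "u b = u a + rA * (b - a)" using tA[of b] tB[of b] \<open>\<alpha> = \<beta>\<close> by simp
      ultimately have "u x \<le> u a + rA * (x - a)" by (simp add: algebra_simps)
      hence "gg x \<le> 0" using True by (simp add: gdef)
      thus ?thesis using gnn[OF x] by simp
    qed
    show ?thesis using Vle g0 by force
  next
    case False
    define \<gamma> where "\<gamma> = 3 - \<alpha> - \<beta>"
    have \<gamma>: "\<gamma> \<in> K" "\<And>i. i \<in> K \<Longrightarrow> i \<noteq> \<alpha> \<Longrightarrow> i \<noteq> \<beta> \<Longrightarrow> i = \<gamma>"
      using \<alpha>(1) \<beta>(1) False unfolding K_def \<gamma>_def by auto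
    have onJ: "u t = P \<gamma> t" if t: "t \<in> {a..b}" "0 < gg t" for t
    proof -
      obtain i where i: "i \<in> K" "P i t = u t" using rep'[OF t(1)] by blast
      have "P \<alpha> t < u t" using gpos(1)[OF t] tA[of t] by simp
      hence "i \<noteq> \<alpha>" using i by auto
      moreover have "P \<beta> t < u t" using gpos(2)[OF t] tB[of t] by simp
      hence "i \<noteq> \<beta>" using i by auto
      ultimately have "i = \<gamma>" using \<gamma>(2)[OF i(1)] by simp
      thus ?thesis using i by simp
    qed
    have contP: "continuous_on S (P \<gamma>)" for S unfolding P_def by (intro continuous_intros)
    show ?thesis
    proof
      fix x assume x: "x \<in> X"
      show "VV x \<le> u x" unfolding VV_def vex_eq
      proof (rule cSUP_least[OF fne])
        fix G assume G: "G \<in> fam ph"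
        have GX: "G t \<le> u t + gg t" if "t \<in> X" for t using G that by (simp add: fam_def ph_def)
        have cxG: "cx X G" using G by (simp add: fam_def convex_on_imp_cx)
        show "G x \<le> u x"
        proof (cases "0 < gg x")
          case False thus ?thesis using GX[OF x] by simp
        next
          case True
          have xab: "x \<in> {a..b}" using True by (cases "x \<in> {a..b}") (auto simp: gdef)
          define Z1 where "Z1 = {t \<in> {a..x}. gg t = 0}"
          have clZ1: "closed Z1" unfolding Z1_def
            using xab by (intro continuous_closed_preimage_constant continuous_on_subset[OF gcont]) auto
          have aZ1: "a \<in> Z1" using ga xab by (simp add: Z1_def)
          have bZ1: "bdd_above Z1" unfolding Z1_def by (rule bdd_aboveI[where M=x]) auto
          define p where "p = Sup Z1"
          have pZ1: "p \<in> Z1" unfolding p_def using closed_contains_Sup[OF _ bZ1 clZ1] aZ1 by auto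
          have gp: "gg p = 0" and pax: "a \<le> p" "p \<le> x" using pZ1 by (auto simp: Z1_def)
          have px: "p < x" using pax gp True by (cases "p = x") auto
          have posL: "0 < gg t" if t: "t \<in> {p<..x}" for t
          proof (rule ccontr)
            assume "\<not> 0 < gg t"
            moreover have "0 \<le> gg t" using gnn[of t] t pax xab ab by auto
            ultimately have "t \<in> Z1" using t pax by (auto simp: Z1_def)
            hence "t \<le> p" unfolding p_def using bZ1 by (rule cSup_upper)
            thus False using t by simp
          qed
          have clS1: "closed {t \<in> {p..x}. u t - P \<gamma> t = 0}"
            using pax xab ab
            by (intro continuous_closed_preimage_constant continuous_intros
                   continuous_on_subset[OF contu] contP) auto
          have "{p<..x} \<subseteq> {t \<in> {p..x}. u t - P \<gamma> t = 0}"
            using onJ posL pax xab by force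
          hence "closure {p<..x} \<subseteq> {t \<in> {p..x}. u t - P \<gamma> t = 0}" using clS1 by (rule closure_minimal)
          moreover have "p \<in> closure {p<..x}" using px by simp
          ultimately have up: "u p = P \<gamma> p" by auto
          define Z2 where "Z2 = {t \<in> {x..b}. gg t = 0}"
          have clZ2: "closed Z2" unfolding Z2_def
            using xab by (intro continuous_closed_preimage_constant continuous_on_subset[OF gcont]) auto
          have bZ2': "b \<in> Z2" using gb xab by (simp add: Z2_def)
          have bZ2: "bdd_below Z2" unfolding Z2_def by (rule bdd_belowI[where m=x]) auto
          define q where "q = Inf Z2"
          have qZ2: "q \<in> Z2" unfolding q_def using closed_contains_Inf[OF _ bZ2 clZ2] bZ2' by auto
          have gq: "gg q = 0" and qxb: "x \<le> q" "q \<le> b" using qZ2 by (auto simp: Z2_def)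
          have xq: "x < q" using qxb gq True by (cases "q = x") auto
          have posR: "0 < gg t" if t: "t \<in> {x..<q}" for t
          proof (rule ccontr)
            assume "\<not> 0 < gg t"
            moreover have "0 \<le> gg t" using gnn[of t] t qxb xab ab by auto
            ultimately have "t \<in> Z2" using t qxb by (auto simp: Z2_def)
            hence "q \<le> t" unfolding q_def using bZ2 by (rule cInf_lower)
            thus False using t by simp
          qed
          have clS2: "closed {t \<in> {x..q}. u t - P \<gamma> t = 0}"
            using qxb xab ab
            by (intro continuous_closed_preimage_constant continuous_intros
                   continuous_on_subset[OF contu] contP) auto
          have "{x..<q} \<subseteq> {t \<in> {x..q}. u t - P \<gamma> t = 0}"
            using onJ posR qxb xab by force
          hence "closure {x..<q} \<subseteq> {t \<in> {x..q}. u t - P \<gamma> t = 0}" using clS2 by (rule closure_minimal)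
          moreover have "q \<in> closure {x..<q}" using xq by simp
          ultimately have uq: "u q = P \<gamma> q" by auto
          have pX: "p \<in> X" and qX: "q \<in> X" using pax qxb xab ab by auto
          have Gp: "G p \<le> P \<gamma> p" using GX[OF pX] gp up by simp
          have Gq: "G q \<le> P \<gamma> q" using GX[OF qX] gq uq by simp
          have "G x * (q - p) \<le> G p * (q - x) + G q * (x - p)" using cxD[OF cxG pX x qX px xq] .
          also have "\<dots> \<le> P \<gamma> p * (q - x) + P \<gamma> q * (x - p)"
            using Gp Gq px xq by (intro add_mono mult_right_mono) auto
          also have "\<dots> = P \<gamma> x * (q - p)" by (simp add: P_def algebra_simps)
          finally have "G x * (q - p) \<le> P \<gamma> x * (q - p)" .
          hence "G x \<le> P \<gamma> x" using px xq by simp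
          thus ?thesis using onJ[OF xab True] by simp
        qed
      qed
    qed
  qed
qed

end

theorem lemma8:
  fixes lo hi u :: "real \<Rightarrow> real" and s1 s2 a b :: real
  assumes "CFI_data lo hi s1 s2"
    and "u \<in> CFI lo hi s1 s2"
    and "0 \<le> a" and "a \<le> b" and "b \<le> 1"
    and "\<forall>x\<in>{a..b}. lo x < u x \<and> u x < hi x"
  shows "(\<forall>\<epsilon>\<in>{0..1}.
            cvx (\<lambda>x. u x + \<epsilon> * h_ab u a b x) \<and> subdiff_X (\<lambda>x. u x + \<epsilon> * h_ab u a b x) \<subseteq> {s1..s2} \<and>
            cvx (\<lambda>x. u x - \<epsilon> * h_ab u a b x) \<and> subdiff_X (\<lambda>x. u x - \<epsilon> * h_ab u a b x) \<subseteq> {s1..s2})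
       \<and> ((\<forall>x\<in>X. h_ab u a b x = 0) \<longleftrightarrow>
          (\<exists>m0 c0 m1 c1 m2 c2 :: real. \<forall>x\<in>{a..b}.
              u x = max (m0 * x + c0) (max (m1 * x + c1) (m2 * x + c2))))"
proof -
  have cv: "cvx u" and sdu: "subdiff_X u \<subseteq> {s1..s2}" using assms(2) by (auto simp: CFI_def)
  have cxu: "cx X u" using cv by (simp add: cvx_def convex_on_imp_cx)
  have SB: "SB u s1 s2" by (rule SB_u[OF cv sdu])
  have hdef: "\<And>x. h_ab u a b x = vex (\<lambda>y. u y + g_ab u a b y) x - u x" by (simp add: h_ab_def)
  show ?thesis
  proof (cases "a = b")
    case True
    have g0: "g_ab u a b x = 0" for x
      by (cases "x = b") (auto simp: g_ab_def t_right_def t_left_def True)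
    have cxg: "cx X (\<lambda>x. u x - g_ab u a b x)" using cxu by (rule cx_cong) (simp add: g0)
    have pb: "\<forall>y\<in>X. u 0 + s1 * y \<le> u y - g_ab u a b y \<and> u 1 - s2 * (1 - y) \<le> u y - g_ab u a b y"
    proof
      fix y assume y: "y \<in> X"
      have "s1 * (y - 0) \<le> u y - u 0" using SBD[OF SB, of 0 y] y by auto
      moreover have "u 1 - u y \<le> s2 * (1 - y)" using SBD[OF SB, of y 1] y by auto
      ultimately show "u 0 + s1 * y \<le> u y - g_ab u a b y \<and> u 1 - s2 * (1 - y) \<le> u y - g_ab u a b y"
        by (simp add: g0)
    qed
    have P1: "\<forall>\<epsilon>\<in>{0..1}.
            cvx (\<lambda>x. u x + \<epsilon> * h_ab u a b x) \<and> subdiff_X (\<lambda>x. u x + \<epsilon> * h_ab u a b x) \<subseteq> {s1..s2} \<and>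
            cvx (\<lambda>x. u x - \<epsilon> * h_ab u a b x) \<and> subdiff_X (\<lambda>x. u x - \<epsilon> * h_ab u a b x) \<subseteq> {s1..s2}"
    proof
      fix \<epsilon> :: real assume e: "\<epsilon> \<in> {0..1}"
      show "cvx (\<lambda>x. u x + \<epsilon> * h_ab u a b x) \<and> subdiff_X (\<lambda>x. u x + \<epsilon> * h_ab u a b x) \<subseteq> {s1..s2} \<and>
            cvx (\<lambda>x. u x - \<epsilon> * h_ab u a b x) \<and> subdiff_X (\<lambda>x. u x - \<epsilon> * h_ab u a b x) \<subseteq> {s1..s2}"
        by (rule part1[OF cv SB _ _ _ cxg pb e hdef]) (simp_all add: g0)
    qed
    have ph: "(\<lambda>y. u y + g_ab u a b y) = u" by (simp add: g0)
    have ufam: "u \<in> fam u" using cv by (simp add: fam_def cvx_def)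
    have "h_ab u a b x = 0" if x: "x \<in> X" for x
    proof -
      have "vex u x = u x" using vex_upper[OF ufam x] vex_le[OF _ x, of u] ufam by force
      thus ?thesis by (simp add: hdef ph)
    qed
    moreover have "\<exists>m0 c0 m1 c1 m2 c2 :: real. \<forall>x\<in>{a..b}.
              u x = max (m0 * x + c0) (max (m1 * x + c1) (m2 * x + c2))"
      by (rule exI[of _ 0], rule exI[of _ "u a"], rule exI[of _ 0], rule exI[of _ "u a"],
          rule exI[of _ 0], rule exI[of _ "u a"]) (auto simp: True)
    ultimately show ?thesis using P1 by blast
  next
    case False
    hence ab: "a < b" using assms(4) by simp
    interpret L: absetup u s1 s2 a b using cv SB assms(3,5) ab by unfold_locales auto
    note GF = g_facts[OF cxu SB assms(3) ab assms(5)]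
    have P1: "\<forall>\<epsilon>\<in>{0..1}.
            cvx (\<lambda>x. u x + \<epsilon> * h_ab u a b x) \<and> subdiff_X (\<lambda>x. u x + \<epsilon> * h_ab u a b x) \<subseteq> {s1..s2} \<and>
            cvx (\<lambda>x. u x - \<epsilon> * h_ab u a b x) \<and> subdiff_X (\<lambda>x. u x - \<epsilon> * h_ab u a b x) \<subseteq> {s1..s2}"
    proof
      fix \<epsilon> :: real assume e: "\<epsilon> \<in> {0..1}"
      show "cvx (\<lambda>x. u x + \<epsilon> * h_ab u a b x) \<and> subdiff_X (\<lambda>x. u x + \<epsilon> * h_ab u a b x) \<subseteq> {s1..s2} \<and>
            cvx (\<lambda>x. u x - \<epsilon> * h_ab u a b x) \<and> subdiff_X (\<lambda>x. u x - \<epsilon> * h_ab u a b x) \<subseteq> {s1..s2}"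
        by (rule part1[OF cv SB GF(1) GF(2) GF(3) GF(4) GF(5) e hdef])
    qed
    have hV: "h_ab u a b x = L.VV x - u x" for x
      by (simp add: h_ab_def L.VV_def L.ph_def L.gg_def)
    have "(\<forall>x\<in>X. h_ab u a b x = 0) \<longleftrightarrow>
          (\<exists>m0 c0 m1 c1 m2 c2 :: real. \<forall>x\<in>{a..b}.
              u x = max (m0 * x + c0) (max (m1 * x + c1) (m2 * x + c2)))"
    proof
      assume "\<forall>x\<in>X. h_ab u a b x = 0"
      hence "\<forall>x\<in>X. L.VV x = u x" by (simp add: hV)
      thus "\<exists>m0 c0 m1 c1 m2 c2 :: real. \<forall>x\<in>{a..b}.
              u x = max (m0 * x + c0) (max (m1 * x + c1) (m2 * x + c2))" by (rule L.dir1)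
    next
      assume "\<exists>m0 c0 m1 c1 m2 c2 :: real. \<forall>x\<in>{a..b}.
              u x = max (m0 * x + c0) (max (m1 * x + c1) (m2 * x + c2))"
      then obtain m0 c0 m1 c1 m2 c2 :: real where
        rep: "\<forall>x\<in>{a..b}. u x = max (m0 * x + c0) (max (m1 * x + c1) (m2 * x + c2))" by blast
      have le: "\<forall>x\<in>X. L.VV x \<le> u x" by (rule L.dir2[OF rep])
      show "\<forall>x\<in>X. h_ab u a b x = 0"
      proof
        fix x assume x: "x \<in> X"
        have "L.VV x \<le> u x" using le x by blast
        thus "h_ab u a b x = 0" using L.Vge[OF x] by (simp add: hV)
      qed
    qed
    thus ?thesis using P1 by blast
  qed
qed

end
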